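(* Let $q$ be a prime power, $d\ge5$, $\mathcal C$ the $[q+1,q+2-d,d]_q$ normalized GDRS code, and $\mathcal V^{(2)}$ a coset of weight $2$ of $\mathcal C$ with leader $\mathbf v_2(j_1,j_2;\gamma_1,\gamma_2)$. Let $\beta$ be a primitive element of $\mathbb F_q$, $\gamma=-\gamma_2/\gamma_1$, and $\lambda(\gamma)\in\mathbb Z_{q-1}$ with $\beta^{\lambda(\gamma)}=\gamma$. Write $P=\mathrm P^+_{q-1,d-2}(\lambda(\gamma))$ (with $t$ an integer). Then: (1) $q=3t+1\ge7$, $d=5$: $P=\frac13\left(\binom{q-2}{2}-1\right)+1$ if $\lambda(\gamma)\equiv0\pmod3$, else $P=\frac13\left(\binom{q-2}{2}-1\right)$. (2) $q=4t+3\ge7$, $d=6$: $P=\frac14\left(\binom{q-2}{3}+\frac{q-3}{2}\right)$ if $\lambda(\gamma)\equiv0\pmod2$, else $P=\frac14\left(\binom{q-2}{3}-\frac{q-3}{2}\right)$. (3) $q=5t+1\ge11$, $d=7$: $P=\frac15\left(\binom{q-2}{4}-1\right)+1$ if $\lambda(\gamma)\equiv0\pmod5$, else $P=\frac15\left(\binom{q-2}{4}-1\right)$. (4) $q=6t+3\ge9$ or $q=6t+5\ge11$, $d=8$: $P=\frac16\left(\binom{q-2}{5}-\binom{(q-3)/2}{2}\right)$ if $\lambda(\gamma)\equiv0\pmod2$, else $P=\frac16\left(\binom{q-2}{5}+\binom{(q-3)/2}{2}\right)$. (5) $q=6t+4\ge10$, $d=8$: $P=\frac13\left(\frac12\binom{q-2}{5}+\frac{q-4}{3}\right)$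 if $\lambda(\gamma)\equiv0\pmod3$, else $P=\frac16\left(\binom{q-2}{5}-\frac{q-4}{3}\right)$. (6) $q=7t+1\ge29$, $d=9$: $P=\frac17\left(\binom{q-2}{6}-1\right)+1$ if $\lambda(\gamma)\equiv0\pmod7$, else $P=\frac17\left(\binom{q-2}{6}-1\right)$. (7) $q=4t+7\ge11$, $d=10$: $P=\frac18\left(\binom{q-2}{7}+\binom{(q-3)/2}{3}\right)$ if $\lambda(\gamma)\equiv0\pmod2$, else $P=\frac18\left(\binom{q-2}{7}-\binom{(q-3)/2}{3}\right)$. (8) $q=9t+4\ge13$ or $q=9t+7\ge16$, $d=11$: $P=\frac19\left(\binom{q-2}{8}+2\binom{(q-4)/3}{2}\right)$ if $\lambda(\gamma)\equiv0\pmod3$, else $P=\frac19\left(\binom{q-2}{8}-\binom{(q-4)/3}{2}\right)$. (9) $q=4t+1\ge9$, $d=6$: $P=\frac14\left(\binom{q-2}{3}+\frac{q-7}{2}\right)$ if $\lambda(\gamma)\equiv0\pmod4$; $P=\frac14\left(\binom{q-2}{3}-\frac{q-3}{2}\right)$ if $\lambda(\gamma)\equiv1\pmod2$; $P=\frac14\left(\binom{q-2}{3}+\frac{q+1}{2}\right)$ if $\lambda(\gamma)\equiv2\pmod4$.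
   Context: Normalized GDRS code: the $\mathbb F_q$-linear code of length $q+1$ which is the kernel of the $(d-1)\times(q+1)$ matrix whose first $q$ columns are $(1,m,\dots,m^{d-2})^T$, $m$ running over $\mathbb F_q$, and whose last column is $(0,\dots,0,1)^T$. A coset of weight $2$ is a coset of minimum Hamming weight $2$; $\mathbf v_2(j_1,j_2;\gamma_1,\gamma_2)$ is the vector with $\gamma_1,\gamma_2\in\mathbb F_q^*$ in positions $j_1\ne j_2$ and zeros elsewhere. For positive integers $\mu<R$ and $\lambda\in\mathbb Z_R$ (integers mod $R$), $\mathrm P^+_{R,\mu}(\lambda)$ is the number of $\mu$-element subsets of $\mathbb Z_R$ (distinct elements) whose sum in $\mathbb Z_R$ is $\lambda$. (By the paper's results, $P$ equals the number of weight-$(d-2)$ vectors in $\mathcal V^{(2)}$.) *)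

theory Defs
  imports Complex_Main "HOL-Library.Cardinality"
begin

text \<open>Positions of codewords of length q+1: Some m for m in F_q (the first q columns),
  None for the last column.\<close>

definition gdrs_code :: "nat \<Rightarrow> ('a::{finite,field} option \<Rightarrow> 'a) set" where
  "gdrs_code d = {x. \<forall>i < d - 1.
      (\<Sum>m\<in>(UNIV::'a set). x (Some m) * m ^ i) + (if i = d - 2 then x None else 0) = 0}"

definition hamming_wt :: "('b \<Rightarrow> 'a::zero) \<Rightarrow> nat" where
  "hamming_wt x = card {j. x j \<noteq> 0}"

definition is_coset :: "('b \<Rightarrow> 'a::plus) set \<Rightarrow> ('b \<Rightarrow> 'a) set \<Rightarrow> bool" where
  "is_coset C V \<longleftrightarrow> (\<exists>x. V = (\<lambda>c. \<lambda>j. x j + c j) ` C)"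

definition coset_weight :: "('b \<Rightarrow> 'a::zero) set \<Rightarrow> nat" where
  "coset_weight V = Min (hamming_wt ` V)"

definition is_coset_leader :: "('b \<Rightarrow> 'a::zero) \<Rightarrow> ('b \<Rightarrow> 'a) set \<Rightarrow> bool" where
  "is_coset_leader v V \<longleftrightarrow> v \<in> V \<and> hamming_wt v = coset_weight V"

definition v2 :: "'b \<Rightarrow> 'b \<Rightarrow> 'a \<Rightarrow> 'a \<Rightarrow> ('b \<Rightarrow> 'a::zero)" where
  "v2 j1 j2 g1 g2 = (\<lambda>j. if j = j1 then g1 else if j = j2 then g2 else 0)"

definition primitive_elem :: "'a::field \<Rightarrow> bool" where
  "primitive_elem \<beta> \<longleftrightarrow> \<beta> \<noteq> 0 \<and> (\<forall>x. x \<noteq> 0 \<longrightarrow> (\<exists>k::nat. \<beta> ^ k = x))"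

text \<open>P^+_{R,mu}(lambda): number of mu-element subsets of Z_R = {0..<R} with sum = lambda in Z_R.\<close>
definition Pplus :: "nat \<Rightarrow> nat \<Rightarrow> nat \<Rightarrow> nat" where
  "Pplus R \<mu> l = card {S. S \<subseteq> {..<R} \<and> card S = \<mu> \<and> (\<Sum>S) mod R = l mod R}"

end

theory Submission
  imports Defs "HOL-Number_Theory.Cong"
begin


definition cnt :: "nat \<Rightarrow> nat \<Rightarrow> nat \<Rightarrow> nat \<Rightarrow> nat" where
  "cnt n k M r = card {S. S \<subseteq> {..<n} \<and> card S = k \<and> \<Sum>S mod M = r}"

lemma Pplus_cnt: "Pplus R \<mu> l = cnt R \<mu> R (l mod R)"
  unfolding Pplus_def cnt_def by simp

lemma transl_le:
  assumes n: "0 < n"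
  shows "cnt n k n (s mod n) \<le> cnt n k n ((s + k*a) mod n)"
proof -
  let ?t = "\<lambda>x. (x + a) mod n"
  have inj: "inj_on ?t {..<n}"
  proof (rule inj_onI)
    fix x y assume "x \<in> {..<n}" "y \<in> {..<n}" "(x + a) mod n = (y + a) mod n"
    then show "x = y"
      by (metis cong_def cong_add_rcancel_nat mod_less lessThan_iff)
  qed
  show ?thesis unfolding cnt_def
  proof (rule card_inj_on_le[where f="\<lambda>S. ?t ` S"])
    show "inj_on (\<lambda>S. ?t ` S) {S. S \<subseteq> {..<n} \<and> card S = k \<and> \<Sum> S mod n = s mod n}"
      by (rule inj_on_subset[OF inj_on_image_Pow[OF inj]]) auto
    show "finite {S. S \<subseteq> {..<n} \<and> card S = k \<and> \<Sum> S mod n = (s + k * a) mod n}"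
      by (rule finite_subset[of _ "Pow {..<n}"]) auto
    show "(\<lambda>S. ?t ` S) ` {S. S \<subseteq> {..<n} \<and> card S = k \<and> \<Sum> S mod n = s mod n}
      \<subseteq> {S. S \<subseteq> {..<n} \<and> card S = k \<and> \<Sum> S mod n = (s + k * a) mod n}"
    proof clarify
      fix S assume S: "S \<subseteq> {..<n}" "\<Sum> S mod n = s mod n"
      have injS: "inj_on ?t S" using inj S(1) inj_on_subset by blast
      have fin: "finite S" using S(1) finite_subset by blast
      have "?t ` S \<subseteq> {..<n}" using n by auto
      moreover have "card (?t ` S) = card S" using card_image[OF injS] .
      moreover have "\<Sum>(?t ` S) mod n = (s + card S * a) mod n"
      proof -
        have "\<Sum>(?t ` S) = (\<Sum>x\<in>S. (x + a) mod n)" using sum.reindex[OF injS] by simp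
        hence "\<Sum>(?t ` S) mod n = (\<Sum>x\<in>S. x + a) mod n" by (simp add: mod_sum_eq)
        also have "\<dots> = (\<Sum>S + card S * a) mod n" by (simp add: sum.distrib)
        also have "\<dots> = (\<Sum>S mod n + card S * a) mod n" by (simp add: mod_add_left_eq)
        also have "\<dots> = (s + card S * a) mod n" using S(2) by (simp add: mod_add_left_eq)
        finally show ?thesis .
      qed
      ultimately show "?t ` S \<subseteq> {..<n} \<and> card (?t ` S) = card S \<and> \<Sum> (?t ` S) mod n = (s + card S * a) mod n"
        by simp
    qed
  qed
qed

lemma transl:
  assumes n: "0 < n"
  shows "cnt n k n ((s + k*a) mod n) = cnt n k n (s mod n)"
proof (rule antisym)
  show "cnt n k n (s mod n) \<le> cnt n k n ((s + k*a) mod n)" using transl_le[OF n] .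
  have "cnt n k n ((s + k*a) mod n) \<le> cnt n k n ((s + k*a + k*((n-1)*a)) mod n)"
    using transl_le[OF n, where s="s + k*a" and a="(n-1)*a" and k=k] by simp
  also have "(s + k*a + k*((n-1)*a)) mod n = s mod n"
  proof -
    have "s + k*a + k*((n-1)*a) = s + (k*a)*n" using n
      by (simp add: algebra_simps)
    thus ?thesis by (metis mod_mult_self1)
  qed
  finally show "cnt n k n ((s + k*a) mod n) \<le> cnt n k n (s mod n)" .
qed

lemma classes:
  assumes n: "0 < n" and k: "0 < k" and eq: "s mod gcd n k = s' mod gcd n k"
  shows "cnt n k n (s mod n) = cnt n k n (s' mod n)"
proof -
  let ?g = "gcd n k"
  obtain x y where xy: "k * x = n * y + ?g" using bezout_nat[of k n] k by (auto simp: gcd.commute)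
  have step: "cnt n k n ((r + ?g) mod n) = cnt n k n (r mod n)" for r
  proof -
    have "(r + k*x) mod n = (r + ?g) mod n" using xy
      by (metis add.commute mod_add_left_eq mod_mult_self1 mult.commute)
    thus ?thesis using transl[OF n, where s=r and k=k and a=x] by simp
  qed
  have many: "cnt n k n ((r + ?g*t) mod n) = cnt n k n (r mod n)" for r t
  proof (induction t)
    case 0 then show ?case by simp
  next
    case (Suc t)
    have "cnt n k n ((r + ?g * Suc t) mod n) = cnt n k n (((r + ?g*t) + ?g) mod n)"
      by (simp add: algebra_simps)
    also have "\<dots> = cnt n k n ((r + ?g*t) mod n)" by (rule step)
    finally show ?case using Suc by simp
  qed
  have "cnt n k n (s mod n) = cnt n k n ((s mod ?g) mod n)"
    using many[of "s mod ?g" "s div ?g"] by simp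
  also have "\<dots> = cnt n k n ((s' mod ?g) mod n)" using eq by simp
  also have "\<dots> = cnt n k n (s' mod n)"
    using many[of "s' mod ?g" "s' div ?g"] by simp
  finally show ?thesis .
qed



lemma card_partition_mod:
  fixes f :: "'a \<Rightarrow> nat"
  assumes "finite X" "0 < p"
  shows "card X = (\<Sum>r<p. card {x\<in>X. f x mod p = r})"
proof -
  have "X = (\<Union>r\<in>{..<p}. {x\<in>X. f x mod p = r})"
  proof (intro equalityI subsetI)
    fix x assume "x \<in> X" thus "x \<in> (\<Union>r\<in>{..<p}. {x\<in>X. f x mod p = r})"
      using assms(2) by (intro UN_I[of "f x mod p"]) auto
  qed auto
  hence "card X = card (\<Union>r\<in>{..<p}. {x\<in>X. f x mod p = r})" by simp
  also have "\<dots> = (\<Sum>r<p. card {x\<in>X. f x mod p = r})"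
    by (rule card_UN_disjoint) (use assms in auto)
  finally show ?thesis .
qed

lemma card_residue_class:
  assumes "0 < g" "g dvd n" "r < g"
  shows "card {s. s < n \<and> s mod g = r} = n div g"
proof -
  have "bij_betw (\<lambda>t. r + g*t) {..<n div g} {s. s < n \<and> s mod g = r}"
  proof (rule bij_betw_imageI)
    show "inj_on (\<lambda>t. r + g*t) {..<n div g}" using assms(1) by (auto simp: inj_on_def)
    show "(\<lambda>t. r + g*t) ` {..<n div g} = {s. s < n \<and> s mod g = r}"
    proof (intro equalityI subsetI)
      fix s assume "s \<in> (\<lambda>t. r + g*t) ` {..<n div g}"
      then obtain t where t: "t < n div g" "s = r + g*t" by auto
      have "Suc t \<le> n div g" using t(1) by simp
      hence "g * Suc t \<le> g * (n div g)" by (rule mult_le_mono2)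
      hence "g * t + g \<le> n" using assms(2) by simp
      thus "s \<in> {s. s < n \<and> s mod g = r}" using t assms(1,3) by auto
    next
      fix s assume s: "s \<in> {s. s < n \<and> s mod g = r}"
      have "g * (s div g) \<le> s" by simp
      also have "s < g * (n div g)" using s assms(2) by simp
      finally have "s div g < n div g" by simp
      moreover have "s = r + g * (s div g)" using s mod_mult_div_eq[of s g] by simp
      ultimately show "s \<in> (\<lambda>t. r + g*t) ` {..<n div g}" by blast
    qed
  qed
  thus ?thesis by (simp add: bij_betw_same_card[symmetric])
qed

lemma agg:
  assumes n: "0 < n" and k: "0 < k" and r: "r < gcd n k"
  shows "cnt n k (gcd n k) r = (n div gcd n k) * cnt n k n r"
proof -
  let ?g = "gcd n k"
  let ?F = "{S. S \<subseteq> {..<n} \<and> card S = k}"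
  have g0: "0 < ?g" using n by simp
  have gn: "?g dvd n" by simp
  have rn: "r < n" using r gcd_le1_nat[of n k] n by linarith
  have set: "{S. S \<subseteq> {..<n} \<and> card S = k \<and> \<Sum>S mod ?g = r}
     = (\<Union>s\<in>{s. s < n \<and> s mod ?g = r}. {S. S \<subseteq> {..<n} \<and> card S = k \<and> \<Sum>S mod n = s})"
  proof (intro equalityI subsetI)
    fix S assume "S \<in> {S. S \<subseteq> {..<n} \<and> card S = k \<and> \<Sum>S mod ?g = r}"
    thus "S \<in> (\<Union>s\<in>{s. s < n \<and> s mod ?g = r}. {S. S \<subseteq> {..<n} \<and> card S = k \<and> \<Sum>S mod n = s})"
      using n gn by (auto simp: mod_mod_cancel intro!: bexI[where x="\<Sum>S mod n"])
  next
    fix S assume "S \<in> (\<Union>s\<in>{s. s < n \<and> s mod ?g = r}. {S. S \<subseteq> {..<n} \<and> card S = k \<and> \<Sum>S mod n = s})"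
    thus "S \<in> {S. S \<subseteq> {..<n} \<and> card S = k \<and> \<Sum>S mod ?g = r}"
      using gn by (auto simp: mod_mod_cancel)
  qed
  have "cnt n k ?g r = (\<Sum>s\<in>{s. s < n \<and> s mod ?g = r}. cnt n k n s)"
    unfolding cnt_def set
    by (rule card_UN_disjoint) (auto intro: finite_subset[of _ "Pow {..<n}"])
  also have "\<dots> = (\<Sum>s\<in>{s. s < n \<and> s mod ?g = r}. cnt n k n r)"
  proof (rule sum.cong[OF refl])
    fix s assume s: "s \<in> {s. s < n \<and> s mod ?g = r}"
    have "cnt n k n (s mod n) = cnt n k n (r mod n)"
      by (rule classes[OF n k]) (use s r in auto)
    thus "cnt n k n s = cnt n k n r" using s rn by simp
  qed
  also have "\<dots> = (n div ?g) * cnt n k n r"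
    using card_residue_class[OF g0 gn r] by simp
  finally show ?thesis .
qed



definition prof :: "nat \<Rightarrow> nat set \<Rightarrow> nat \<Rightarrow> nat" where
  "prof p S b = card {x\<in>S. x div p = b}"

definition rho :: "nat \<Rightarrow> nat \<Rightarrow> nat \<Rightarrow> nat \<Rightarrow> nat" where
  "rho p b c x = (if x div p = b then p*b + (x + c) mod p else x)"

lemma rho_div: "0 < p \<Longrightarrow> rho p b c x div p = x div p"
  unfolding rho_def by auto

lemma rho_inj:
  assumes p: "0 < p" shows "inj (rho p b c)"
proof (rule injI)
  fix x y assume eq: "rho p b c x = rho p b c y"
  hence dv: "x div p = y div p" using rho_div[OF p] by metis
  show "x = y"
  proof (cases "x div p = b")
    case True
    hence "(x + c) mod p = (y + c) mod p" using eq dv unfolding rho_def by auto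
    hence "x mod p = y mod p" by (metis cong_def cong_add_rcancel_nat)
    thus ?thesis using dv by (metis div_mult_mod_eq)
  next
    case False
    thus ?thesis using eq dv unfolding rho_def by auto
  qed
qed

lemma rho_lt:
  assumes p: "0 < p" and x: "x < p*m" and b: "b < m"
  shows "rho p b c x < p*m"
proof (cases "x div p = b")
  case True
  have "(x + c) mod p < p" using p by simp
  hence "p*b + (x + c) mod p < p * Suc b" by simp
  also have "p * Suc b \<le> p*m" using b by (intro mult_le_mono2) simp
  finally show ?thesis using True unfolding rho_def by simp
next
  case False thus ?thesis using x unfolding rho_def by simp
qed

lemma prof_rho:
  assumes p: "0 < p" shows "prof p (rho p b c ` S) = prof p S"
proof
  fix b'
  have "{y \<in> rho p b c ` S. y div p = b'} = rho p b c ` {x\<in>S. x div p = b'}"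
    using rho_div[OF p] by auto
  hence "card {y \<in> rho p b c ` S. y div p = b'} = card {x\<in>S. x div p = b'}"
    using card_image[OF inj_on_subset[OF rho_inj[OF p]]] by simp
  thus "prof p (rho p b c ` S) b' = prof p S b'" unfolding prof_def .
qed

lemma sum_rho:
  assumes p: "0 < p" and fin: "finite S"
  shows "\<Sum>(rho p b c ` S) mod p = (\<Sum>S + c * prof p S b) mod p"
proof -
  have "\<Sum>(rho p b c ` S) = (\<Sum>x\<in>S. rho p b c x)"
    using sum.reindex[OF inj_on_subset[OF rho_inj[OF p]]] by simp
  hence "\<Sum>(rho p b c ` S) mod p = (\<Sum>x\<in>S. rho p b c x mod p) mod p" by (simp add: mod_sum_eq)
  also have "(\<Sum>x\<in>S. rho p b c x mod p) = (\<Sum>x\<in>S. (x + (if x div p = b then c else 0)) mod p)"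
    by (rule sum.cong) (auto simp: rho_def)
  also have "(\<dots>) mod p = (\<Sum>x\<in>S. x + (if x div p = b then c else 0)) mod p" by (simp add: mod_sum_eq)
  also have "(\<Sum>x\<in>S. x + (if x div p = b then c else 0)) = \<Sum>S + (\<Sum>x\<in>S. if x div p = b then c else 0)"
    by (simp add: sum.distrib)
  also have "(\<Sum>x\<in>S. if x div p = b then c else 0) = c * prof p S b"
    using fin unfolding prof_def by (simp add: sum.If_cases Int_def mult.commute)
  finally show ?thesis .
qed

lemma shift_le:
  fixes f :: "'a \<Rightarrow> nat"
  assumes fin: "finite X" and inj: "inj_on \<psi> X" and into: "\<psi> ` X \<subseteq> X"
    and sh: "\<And>S. S \<in> X \<Longrightarrow> f (\<psi> S) mod p = (f S + \<delta>) mod p"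
  shows "card {S\<in>X. f S mod p = r mod p} \<le> card {S\<in>X. f S mod p = (r + \<delta>) mod p}"
proof (rule card_inj_on_le[where f=\<psi>])
  show "inj_on \<psi> {S \<in> X. f S mod p = r mod p}" using inj by (rule inj_on_subset) auto
  show "finite {S \<in> X. f S mod p = (r + \<delta>) mod p}" using fin by simp
  show "\<psi> ` {S \<in> X. f S mod p = r mod p} \<subseteq> {S \<in> X. f S mod p = (r + \<delta>) mod p}"
  proof clarify
    fix S assume S: "S \<in> X" "f S mod p = r mod p"
    have "f (\<psi> S) mod p = (f S + \<delta>) mod p" using sh S(1) .
    also have "\<dots> = (f S mod p + \<delta>) mod p" by (simp add: mod_add_left_eq)
    also have "\<dots> = (r + \<delta>) mod p" using S(2) by (simp add: mod_add_left_eq)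
    finally show "\<psi> S \<in> X \<and> f (\<psi> S) mod p = (r + \<delta>) mod p" using into S(1) by auto
  qed
qed

lemma shift_card:
  fixes f :: "'a \<Rightarrow> nat"
  assumes fin: "finite X" and inj: "inj_on \<psi> X" and into: "\<psi> ` X \<subseteq> X"
    and sh: "\<And>S. S \<in> X \<Longrightarrow> f (\<psi> S) mod p = (f S + \<delta>) mod p" and p: "0 < p"
  shows "card {S\<in>X. f S mod p = r mod p} = card {S\<in>X. f S mod p = (r + \<delta>) mod p}"
proof -
  define c where "c r = card {S\<in>X. f S mod p = r mod p}" for r
  have le: "c r \<le> c (r + \<delta>)" for r
  proof -
    have "c r \<le> card {S\<in>X. f S mod p = (r + \<delta>) mod p}"
      unfolding c_def by (rule shift_le[where f=f and \<psi>=\<psi> and X=X and \<delta>=\<delta>, OF fin inj into sh])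
    thus ?thesis unfolding c_def by simp
  qed
  have many: "c r \<le> c (r + t * \<delta>)" for r t
  proof (induction t)
    case (Suc t)
    have "c (r + t*\<delta>) \<le> c (r + t*\<delta> + \<delta>)" by (rule le)
    moreover have "r + t*\<delta> + \<delta> = r + Suc t * \<delta>" by simp
    ultimately show ?case using Suc by (metis le_trans)
  qed simp
  have "c (r + \<delta>) \<le> c (r + \<delta> + (p - 1) * \<delta>)" by (rule many)
  also have "r + \<delta> + (p - 1) * \<delta> = r + p * \<delta>" using p
    by (cases p) (auto simp: algebra_simps)
  also have "c (r + p * \<delta>) = c r" unfolding c_def by simp
  finally have "c (r + \<delta>) \<le> c r" .
  with le[of r] have "c r = c (r + \<delta>)" by simp
  thus ?thesis unfolding c_def by simp
qed

lemma rot_block: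
  assumes p: "0 < p" and n: "n = p*m"
    and X: "X = {S. S \<subseteq> {..<n} \<and> card S = k \<and> \<Phi> (prof p S)}"
    and Bm: "\<And>S. S \<in> X \<Longrightarrow> Bf (prof p S) < m"
    and Cd: "\<And>S. S \<in> X \<Longrightarrow> (Cf (prof p S) * prof p S (Bf (prof p S))) mod p = \<delta> mod p"
  shows "card {S\<in>X. \<Sum>S mod p = r mod p} = card {S\<in>X. \<Sum>S mod p = (r + \<delta>) mod p}"
proof -
  define \<psi> where "\<psi> S = rho p (Bf (prof p S)) (Cf (prof p S)) ` S" for S
  have profpsi: "prof p (\<psi> S) = prof p S" for S unfolding \<psi>_def by (rule prof_rho[OF p])
  have fin: "finite X" unfolding X by (rule finite_subset[of _ "Pow {..<n}"]) auto
  show ?thesis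
  proof (rule shift_card[OF fin _ _ _ p])
    show "inj_on \<psi> X"
    proof (rule inj_onI)
      fix S T assume "S \<in> X" "T \<in> X" and eq: "\<psi> S = \<psi> T"
      have "prof p S = prof p T" using profpsi eq by metis
      hence "rho p (Bf (prof p S)) (Cf (prof p S)) ` S = rho p (Bf (prof p S)) (Cf (prof p S)) ` T"
        using eq unfolding \<psi>_def by simp
      thus "S = T" using rho_inj[OF p] by (simp add: inj_image_eq_iff)
    qed
    show "\<psi> ` X \<subseteq> X"
    proof clarify
      fix S assume S: "S \<in> X"
      have sub: "S \<subseteq> {..<n}" and cS: "card S = k" and ph: "\<Phi> (prof p S)" using S X by auto
      have "\<psi> S \<subseteq> {..<n}" using sub rho_lt[OF p _ Bm[OF S]] n unfolding \<psi>_def by auto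
      moreover have "card (\<psi> S) = k" using cS card_image[OF inj_on_subset[OF rho_inj[OF p]]]
        unfolding \<psi>_def by simp
      ultimately show "\<psi> S \<in> X" using ph profpsi X by auto
    qed
    fix S assume S: "S \<in> X"
    have finS: "finite S" using S X finite_subset by auto
    have "\<Sum>(\<psi> S) mod p = (\<Sum>S + Cf (prof p S) * prof p S (Bf (prof p S))) mod p"
      unfolding \<psi>_def by (rule sum_rho[OF p finS])
    also have "\<dots> = (\<Sum>S + (Cf (prof p S) * prof p S (Bf (prof p S))) mod p) mod p"
      by (simp add: mod_add_right_eq)
    also have "\<dots> = (\<Sum>S + \<delta>) mod p" using Cd[OF S] by (simp add: mod_add_right_eq)
    finally show "\<Sum>(\<psi> S) mod p = (\<Sum>S + \<delta>) mod p" .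
  qed
qed



lemma blk_eq: "0 < p \<Longrightarrow> {x::nat. x div p = b} = {p*b..<p*b+p}"
proof (intro equalityI subsetI)
  fix x assume p: "0 < p" and "x \<in> {x. x div p = b}"
  hence b: "x div p = b" by simp
  have e: "x = p * b + x mod p" using b mult_div_mod_eq[of p x] by simp
  have "x mod p < p" using p by simp
  thus "x \<in> {p*b..<p*b+p}" using e by (simp del: mult_div_mod_eq)
next
  fix x assume p: "0 < p" and "x \<in> {p*b..<p*b+p}"
  then obtain r where "x = p*b + r" "r < p"
    by (intro that[of "x - p*b"]) auto
  thus "x \<in> {x. x div p = b}" using p by simp
qed

lemma blk_card: "0 < p \<Longrightarrow> card {x::nat. x div p = b} = p"
  by (simp add: blk_eq)

lemma blk_finite: "0 < p \<Longrightarrow> finite {x::nat. x div p = b}"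
  by (simp add: blk_eq)

lemma blk_sum: assumes p: "0 < p" shows "\<Sum>{x::nat. x div p = b} mod p = (\<Sum>r<p. r) mod p"
proof -
  have "{x::nat. x div p = b} = (\<lambda>r. p*b + r) ` {..<p}"
  proof -
    have "{p*b..<p*b+p} = (\<lambda>r. p*b + r) ` {..<p}"
    proof (intro equalityI subsetI)
      fix x assume x: "x \<in> {p*b..<p*b+p}"
      hence "x = p*b + (x - p*b)" "x - p*b < p" by auto
      thus "x \<in> (\<lambda>r. p*b + r) ` {..<p}" by blast
    qed auto
    thus ?thesis using blk_eq[OF p] by simp
  qed
  hence "\<Sum>{x::nat. x div p = b} = (\<Sum>r<p. p*b + r)"
    by (simp add: sum.reindex inj_on_def)
  also have "\<dots> = p * (p*b) + (\<Sum>r<p. r)" by (simp add: sum.distrib)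
  finally show ?thesis by simp
qed

definition U :: "nat \<Rightarrow> nat set \<Rightarrow> nat set" where
  "U p T = {x. x div p \<in> T}"

lemma U_Union: "U p T = (\<Union>b\<in>T. {x. x div p = b})" unfolding U_def by auto

lemma U_card: assumes p: "0 < p" and T: "finite T" shows "card (U p T) = p * card T"
proof -
  have "card (U p T) = (\<Sum>b\<in>T. card {x. x div p = b})"
    unfolding U_Union by (rule card_UN_disjoint) (use T p blk_finite in auto)
  thus ?thesis using blk_card[OF p] by simp
qed

lemma U_sum: assumes p: "0 < p" and T: "finite T"
  shows "\<Sum>(U p T) mod p = (card T * (\<Sum>r<p. r)) mod p"
proof -
  have "\<Sum>(U p T) = (\<Sum>b\<in>T. \<Sum>{x. x div p = b})"
    unfolding U_Union by (rule sum.UNION_disjoint) (use T p blk_finite in auto)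
  hence "\<Sum>(U p T) mod p = (\<Sum>b\<in>T. \<Sum>{x. x div p = b} mod p) mod p" by (simp add: mod_sum_eq)
  also have "\<dots> = (\<Sum>b\<in>T. (\<Sum>r<p. r) mod p) mod p" using blk_sum[OF p] by simp
  also have "\<dots> = (card T * (\<Sum>r<p. r)) mod p" by (simp add: mod_mult_right_eq)
  finally show ?thesis .
qed

lemma U_prof: assumes p: "0 < p" shows "prof p (U p T) b = (if b \<in> T then p else 0)"
proof -
  have "{x \<in> U p T. x div p = b} = (if b \<in> T then {x. x div p = b} else {})"
    unfolding U_def by auto
  thus ?thesis unfolding prof_def using blk_card[OF p, of b] by simp
qed

lemma U_sub: assumes p: "0 < p" and T: "T \<subseteq> {..<m}" shows "U p T \<subseteq> {..<p*m}"
proof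
  fix x assume "x \<in> U p T"
  hence "x div p < m" using T unfolding U_def by auto
  thus "x \<in> {..<p*m}" using p by (simp add: div_less_iff_less_mult mult.commute)
qed

lemma U_inj: assumes p: "0 < p" shows "inj (U p)"
proof (rule injI)
  fix T T' assume eq: "U p T = U p T'"
  have "b \<in> T \<longleftrightarrow> p*b \<in> U p T" for b T using p unfolding U_def by simp
  thus "T = T'" using eq by blast
qed



lemma prof_le: assumes p: "0 < p" and fin: "finite S" shows "prof p S b \<le> p"
  unfolding prof_def using card_mono[OF blk_finite[OF p, of b], of "{x\<in>S. x div p = b}"] blk_card[OF p]
  by auto

lemma prime_bad_uniform:
  fixes k :: nat
  assumes p: "prime p" and n: "n = p*m"
  defines "X \<equiv> {S. S \<subseteq> {..<n} \<and> card S = k \<and> (\<exists>b<m. 0 < prof p S b \<and> prof p S b < p)}"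
  shows "card {S\<in>X. \<Sum>S mod p = r mod p} = card {S\<in>X. \<Sum>S mod p = 0}"
proof -
  have p0: "0 < p" using p prime_gt_0_nat by blast
  have p1: "1 < p" using p prime_gt_1_nat by blast
  define Bf where "Bf \<pi> = (LEAST b. 0 < \<pi> b \<and> \<pi> b < p)" for \<pi> :: "nat \<Rightarrow> nat"
  define Cf where "Cf \<pi> = (SOME c. [\<pi> (Bf \<pi>) * c = 1] (mod p))" for \<pi> :: "nat \<Rightarrow> nat"
  have step: "card {S\<in>X. \<Sum>S mod p = r mod p} = card {S\<in>X. \<Sum>S mod p = (r + 1) mod p}" for r
  proof (rule rot_block[OF p0 n, where \<Phi>="\<lambda>\<pi>. \<exists>b<m. 0 < \<pi> b \<and> \<pi> b < p" and Bf=Bf and Cf=Cf])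
    show "X = {S. S \<subseteq> {..<n} \<and> card S = k \<and> (\<exists>b<m. 0 < prof p S b \<and> prof p S b < p)}"
      unfolding X_def ..
  next
    fix S assume "S \<in> X"
    then obtain b where b: "b < m" "0 < prof p S b" "prof p S b < p" unfolding X_def by auto
    have le: "Bf (prof p S) \<le> b" unfolding Bf_def by (rule Least_le) (use b in auto)
    thus "Bf (prof p S) < m" using b by simp
    have j: "0 < prof p S (Bf (prof p S))" "prof p S (Bf (prof p S)) < p"
      unfolding Bf_def using LeastI[of "\<lambda>b. 0 < prof p S b \<and> prof p S b < p" b] b by auto
    have "\<not> p dvd prof p S (Bf (prof p S))" using j by (auto dest: dvd_imp_le)
    hence "coprime p (prof p S (Bf (prof p S)))" by (rule prime_imp_coprime[OF p])
    hence "coprime (prof p S (Bf (prof p S))) p" by (simp add: coprime_commute)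
    then obtain c where "[prof p S (Bf (prof p S)) * c = Suc 0] (mod p)"
      using cong_solve_coprime_nat by blast
    hence "[prof p S (Bf (prof p S)) * c = 1] (mod p)" by simp
    hence "[prof p S (Bf (prof p S)) * Cf (prof p S) = 1] (mod p)"
      unfolding Cf_def by (rule someI)
    thus "Cf (prof p S) * prof p S (Bf (prof p S)) mod p = 1 mod p"
      unfolding cong_def by (simp add: mult.commute)
  qed
  have "card {S\<in>X. \<Sum>S mod p = r mod p} = card {S\<in>X. \<Sum>S mod p = 0 mod p}" for r
  proof (induction r)
    case (Suc r) thus ?case using step[of r] by simp
  qed simp
  thus ?thesis by simp
qed

lemma prime_good:
  assumes p0: "0 < p" and n: "n = p*m" and k: "k = p*i"
  defines "G \<equiv> {S. S \<subseteq> {..<n} \<and> card S = k \<and> \<not>(\<exists>b<m. 0 < prof p S b \<and> prof p S b < p)}"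
  shows "G = U p ` {T. T \<subseteq> {..<m} \<and> card T = i}"
proof -
  show ?thesis
  proof (intro equalityI subsetI)
    fix S assume "S \<in> G"
    hence sub: "S \<subseteq> {..<n}" and cS: "card S = k" and nb: "\<forall>b<m. \<not>(0 < prof p S b \<and> prof p S b < p)"
      unfolding G_def by auto
    have finS: "finite S" using sub finite_subset by blast
    define T where "T = {b. b < m \<and> prof p S b = p}"
    have SU: "S = U p T"
    proof (intro equalityI subsetI)
      fix x assume x: "x \<in> S"
      have "x < p*m" using x sub n by auto
      hence bm: "x div p < m" using p0 by (simp add: div_less_iff_less_mult mult.commute)
      have "0 < prof p S (x div p)" unfolding prof_def using finS x by (auto simp: card_gt_0_iff)
      hence "prof p S (x div p) = p" using nb bm prof_le[OF p0 finS, of "x div p"] by force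
      thus "x \<in> U p T" unfolding U_def T_def using bm by simp
    next
      fix x assume "x \<in> U p T"
      hence pr: "prof p S (x div p) = p" unfolding U_def T_def by simp
      have "{y\<in>S. y div p = x div p} = {y. y div p = x div p}"
        by (rule card_subset_eq[OF blk_finite[OF p0]]) (use pr blk_card[OF p0] in \<open>auto simp: prof_def\<close>)
      thus "x \<in> S" by blast
    qed
    have Tsub: "T \<subseteq> {..<m}" unfolding T_def by auto
    have "p * card T = p * i" using U_card[OF p0, of T] Tsub cS k SU finite_subset by fastforce
    hence "card T = i" using p0 by simp
    thus "S \<in> U p ` {T. T \<subseteq> {..<m} \<and> card T = i}" using SU Tsub by blast
  next
    fix S assume "S \<in> U p ` {T. T \<subseteq> {..<m} \<and> card T = i}"
    then obtain T where T: "T \<subseteq> {..<m}" "card T = i" "S = U p T" by blast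
    have finT: "finite T" using T(1) finite_subset by blast
    show "S \<in> G" unfolding G_def using T U_sub[OF p0 T(1)] n U_card[OF p0 finT] k U_prof[OF p0]
      by auto
  qed
qed

lemma prime_count:
  assumes p: "prime p" and n: "n = p*m" and k: "k = p*i" and r: "r < p"
  shows "\<exists>D. p * D + (m choose i) = (n choose k) \<and>
    cnt n k p r = D + (if r = (i * (\<Sum>t<p. t)) mod p then m choose i else 0)"
proof -
  have p0: "0 < p" using p prime_gt_0_nat by blast
  define \<Phi> where "\<Phi> S \<longleftrightarrow> (\<exists>b<m. 0 < prof p S b \<and> prof p S b < p)" for S
  define F where "F = {S. S \<subseteq> {..<n} \<and> card S = k}"
  define X where "X = {S. S \<subseteq> {..<n} \<and> card S = k \<and> \<Phi> S}"
  define G where "G = {S. S \<subseteq> {..<n} \<and> card S = k \<and> \<not> \<Phi> S}"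
  define D where "D = card {S\<in>X. \<Sum>S mod p = 0}"
  define \<epsilon> where "\<epsilon> = (i * (\<Sum>t<p. t)) mod p"
  have finF: "finite F" unfolding F_def by (rule finite_subset[of _ "Pow {..<n}"]) auto
  have finX: "finite X" using finF unfolding X_def F_def by (rule rev_finite_subset) auto
  have finG: "finite G" using finF unfolding G_def F_def by (rule rev_finite_subset) auto
  have Xu: "card {S\<in>X. \<Sum>S mod p = r'} = D" if "r' < p" for r'
    using prime_bad_uniform[OF p n, of k r'] that unfolding D_def X_def \<Phi>_def by simp
  have GU: "G = U p ` {T. T \<subseteq> {..<m} \<and> card T = i}"
    using prime_good[OF p0 n k] unfolding G_def \<Phi>_def by simp
  have cardG: "card G = m choose i"
  proof -
    have "card (U p ` {T. T \<subseteq> {..<m} \<and> card T = i}) = card {T. T \<subseteq> {..<m} \<and> card T = i}"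
      by (rule card_image[OF inj_on_subset[OF U_inj[OF p0]]]) (rule subset_UNIV)
    hence "card G = card {T. T \<subseteq> {..<m} \<and> card T = i}" by (simp only: GU)
    thus ?thesis using n_subsets[of "{..<m}" i] by simp
  qed
  have Gsum: "\<Sum>S mod p = \<epsilon>" if "S \<in> G" for S
  proof -
    have "S \<in> U p ` {T. T \<subseteq> {..<m} \<and> card T = i}" using that by (simp only: GU)
    then obtain T where T: "T \<subseteq> {..<m}" "card T = i" "S = U p T" by blast
    have "finite T" using T(1) finite_subset by blast
    thus ?thesis using U_sum[OF p0, of T] T unfolding \<epsilon>_def by simp
  qed
  have "card F = card X + card G"
  proof -
    have "F = X \<union> G" "X \<inter> G = {}" unfolding F_def X_def G_def by auto
    thus ?thesis using card_Un_disjoint[OF finX finG] by simp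
  qed
  moreover have "card F = n choose k" unfolding F_def using n_subsets[of "{..<n}" k] by simp
  moreover have "card X = p * D"
  proof -
    have "card X = (\<Sum>r'<p. card {S\<in>X. \<Sum>S mod p = r'})" by (rule card_partition_mod[OF finX p0])
    also have "\<dots> = (\<Sum>r'<p. D)" using Xu by simp
    finally show ?thesis by simp
  qed
  ultimately have eq1: "p * D + (m choose i) = (n choose k)" using cardG by simp
  have "cnt n k p r = card {S\<in>X. \<Sum>S mod p = r} + card {S\<in>G. \<Sum>S mod p = r}"
  proof -
    have "{S. S \<subseteq> {..<n} \<and> card S = k \<and> \<Sum>S mod p = r} = {S\<in>X. \<Sum>S mod p = r} \<union> {S\<in>G. \<Sum>S mod p = r}"
      unfolding X_def G_def by auto
    moreover have "{S\<in>X. \<Sum>S mod p = r} \<inter> {S\<in>G. \<Sum>S mod p = r} = {}" unfolding X_def G_def by auto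
    ultimately show ?thesis unfolding cnt_def using finX finG by (simp add: card_Un_disjoint)
  qed
  also have "card {S\<in>X. \<Sum>S mod p = r} = D" using Xu r by simp
  also have "card {S\<in>G. \<Sum>S mod p = r} = (if r = \<epsilon> then m choose i else 0)"
  proof (cases "r = \<epsilon>")
    case True
    hence "{S\<in>G. \<Sum>S mod p = r} = G" using Gsum by auto
    thus ?thesis using True cardG by simp
  next
    case False
    hence e: "{S\<in>G. \<Sum>S mod p = r} = {}" using Gsum by auto
    have "card {S\<in>G. \<Sum>S mod p = r} = 0" unfolding e by simp
    thus ?thesis using False by simp
  qed
  finally have "cnt n k p r = D + (if r = \<epsilon> then m choose i else 0)" .
  with eq1 show ?thesis unfolding \<epsilon>_def by (intro exI[of _ D]) simp
qed

lemma prime_N: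
  assumes p: "prime p" and n: "n = p*m" and k: "k = p*i" and g: "gcd n k = p"
    and m: "0 < m" and i: "0 < i"
  shows "\<exists>D. p * D + (m choose i) = (n choose k) \<and>
    m * cnt n k n (l mod n) = D + (if l mod p = (i * (\<Sum>t<p. t)) mod p then m choose i else 0)"
proof -
  have p0: "0 < p" using p prime_gt_0_nat by blast
  have n0: "0 < n" using n p0 m by simp
  have k0: "0 < k" using k p0 i by simp
  have r: "l mod p < p" using p0 by simp
  obtain D where D: "p * D + (m choose i) = (n choose k)"
    "cnt n k p (l mod p) = D + (if l mod p = (i * (\<Sum>t<p. t)) mod p then m choose i else 0)"
    using prime_count[OF p n k r] by blast
  have "cnt n k p (l mod p) = m * cnt n k n (l mod p)"
    using agg[OF n0 k0, of "l mod p"] r g n p0 by simp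
  moreover have "cnt n k n (l mod n) = cnt n k n ((l mod p) mod n)"
    by (rule classes[OF n0 k0]) (simp add: g)
  moreover have "(l mod p) mod n = l mod p"
    using r n m by (simp add: mod_less less_le_trans[of _ p] )
  ultimately show ?thesis using D by auto
qed



lemma lt4: "(y::nat) < 4 \<Longrightarrow> y = 0 \<or> y = 1 \<or> y = 2 \<or> y = 3" by auto
lemma odd_sq_mod4: "odd (j::nat) \<Longrightarrow> (j * j) mod 4 = 1"
proof -
  assume "odd j"
  then obtain t where "j = 2*t + 1" by (metis oddE)
  hence "j * j = 4 * (t*t + t) + 1" by (simp add: algebra_simps)
  thus ?thesis by simp
qed
lemma small4: "(a::nat) < 4 \<Longrightarrow> r < 4 \<Longrightarrow> (a + r) mod 4 = 0 \<Longrightarrow> a = (4 - r) mod 4"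
proof -
  assume a: "a < 4" and r: "r < 4" and e: "(a + r) mod 4 = 0"
  from lt4[OF a] lt4[OF r] e show ?thesis by (elim disjE) simp_all
qed
lemma small4b: "(x::nat) mod 2 = 0 \<longleftrightarrow> x mod 4 = 0 \<or> x mod 4 = 2"
proof -
  have "x mod 2 = (x mod 4) mod 2" by (simp add: mod_mod_cancel)
  moreover have "x mod 4 < 4" by simp
  ultimately show ?thesis using lt4[of "x mod 4"] by auto
qed

lemma reflect_le:
  assumes n: "0 < n" and r: "r < 4" and r': "r' = (4 - r) mod 4"
  shows "cnt n 4 4 r \<le> cnt n 4 4 r'"
proof -
  let ?t = "\<lambda>x. n - 1 - x"
  have inj: "inj_on ?t {..<n}" by (rule inj_onI) auto
  show ?thesis unfolding cnt_def
  proof (rule card_inj_on_le[where f="\<lambda>S. ?t ` S"])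
    show "inj_on (\<lambda>S. ?t ` S) {S. S \<subseteq> {..<n} \<and> card S = 4 \<and> \<Sum> S mod 4 = r}"
      by (rule inj_on_subset[OF inj_on_image_Pow[OF inj]]) auto
    show "finite {S. S \<subseteq> {..<n} \<and> card S = 4 \<and> \<Sum> S mod 4 = r'}"
      by (rule finite_subset[of _ "Pow {..<n}"]) auto
    show "(\<lambda>S. ?t ` S) ` {S. S \<subseteq> {..<n} \<and> card S = 4 \<and> \<Sum> S mod 4 = r}
      \<subseteq> {S. S \<subseteq> {..<n} \<and> card S = 4 \<and> \<Sum> S mod 4 = r'}"
    proof (rule subsetI)
      fix Y assume "Y \<in> (\<lambda>S. ?t ` S) ` {S. S \<subseteq> {..<n} \<and> card S = 4 \<and> \<Sum> S mod 4 = r}"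
      then obtain S where Y: "Y = ?t ` S" and S: "S \<subseteq> {..<n}" "card S = 4" "\<Sum> S mod 4 = r" by blast
      have injS: "inj_on ?t S" using inj S(1) inj_on_subset by blast
      have "?t ` S \<subseteq> {..<n}" using n by auto
      moreover have "card (?t ` S) = 4" using card_image[OF injS] S(2) by simp
      moreover have "\<Sum>(?t ` S) mod 4 = r'"
      proof -
        have e1: "\<Sum>(?t ` S) = (\<Sum>x\<in>S. n - 1 - x)" using sum.reindex[OF injS] by simp
        have "(\<Sum>x\<in>S. n - 1 - x) + \<Sum>S = (\<Sum>x\<in>S. n - 1 - x + x)" by (simp only: sum.distrib)
        also have "\<dots> = (\<Sum>x\<in>S. n - 1)" by (rule sum.cong) (use S(1) in auto)
        also have "\<dots> = 4 * (n - 1)" using S(2) by simp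
        finally have e2': "(\<Sum>x\<in>S. n - 1 - x) + \<Sum>S = 4 * (n - 1)" .
        have e2: "\<Sum>(?t ` S) + \<Sum>S = 4 * (n - 1)" unfolding e1 by (rule e2')
        have "(\<Sum>(?t ` S) mod 4 + \<Sum>S mod 4) mod 4 = (\<Sum>(?t ` S) + \<Sum>S) mod 4" by (rule mod_add_eq)
        also have "\<dots> = 0" unfolding e2 by simp
        finally have "(\<Sum>(?t ` S) mod 4 + r) mod 4 = 0" using S(3) by simp
        hence "\<Sum>(?t ` S) mod 4 = (4 - r) mod 4" by (intro small4) (use r in simp_all)
        thus ?thesis using r' by simp
      qed
      ultimately show "Y \<in> {S. S \<subseteq> {..<n} \<and> card S = 4 \<and> \<Sum> S mod 4 = r'}"
        using Y by blast
    qed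
  qed
qed

lemma block4:
  assumes n: "n = 4*m" and m: "0 < m"
  shows "cnt n 4 4 2 = cnt n 4 4 0 + m"
proof -
  have p0: "0 < (4::nat)" by simp
  define \<Phi>1 where "\<Phi>1 \<pi> \<longleftrightarrow> (\<exists>b<m. odd (\<pi> b))" for \<pi> :: "nat \<Rightarrow> nat"
  define \<Phi>2 where "\<Phi>2 \<pi> \<longleftrightarrow> \<not> (\<exists>b<m. odd (\<pi> b)) \<and> (\<exists>b<m. \<pi> b = 2)" for \<pi> :: "nat \<Rightarrow> nat"
  define X1 where "X1 = {S. S \<subseteq> {..<n} \<and> card S = 4 \<and> \<Phi>1 (prof 4 S)}"
  define X2 where "X2 = {S. S \<subseteq> {..<n} \<and> card S = 4 \<and> \<Phi>2 (prof 4 S)}"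
  define Gd where "Gd = {S. S \<subseteq> {..<n} \<and> card S = 4 \<and> \<not>(\<exists>b<m. 0 < prof 4 S b \<and> prof 4 S b < 4)}"
  have finP: "finite {S. S \<subseteq> {..<n} \<and> card S = 4 \<and> P S}" for P
    by (rule finite_subset[of _ "Pow {..<n}"]) auto
  have finX1: "finite X1" and finX2: "finite X2" and finGd: "finite Gd"
    unfolding X1_def X2_def Gd_def by (rule finP)+
  define Bf1 where "Bf1 \<pi> = (LEAST b. odd (\<pi> b))" for \<pi> :: "nat \<Rightarrow> nat"
  have step1: "card {S\<in>X1. \<Sum>S mod 4 = r mod 4} = card {S\<in>X1. \<Sum>S mod 4 = (r + 1) mod 4}" for r
  proof (rule rot_block[OF p0 n X1_def, where Bf=Bf1 and Cf="\<lambda>\<pi>. \<pi> (Bf1 \<pi>)"])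
    fix S assume "S \<in> X1"
    then obtain b where b: "b < m" "odd (prof 4 S b)" unfolding X1_def \<Phi>1_def by auto
    have "Bf1 (prof 4 S) \<le> b" unfolding Bf1_def by (rule Least_le) (use b in auto)
    thus "Bf1 (prof 4 S) < m" using b by simp
    have "odd (prof 4 S (Bf1 (prof 4 S)))"
      unfolding Bf1_def by (rule LeastI[of "\<lambda>b. odd (prof 4 S b)" b]) (use b in auto)
    thus "prof 4 S (Bf1 (prof 4 S)) * prof 4 S (Bf1 (prof 4 S)) mod 4 = 1 mod 4"
      using odd_sq_mod4 by simp
  qed
  have u1: "card {S\<in>X1. \<Sum>S mod 4 = r mod 4} = card {S\<in>X1. \<Sum>S mod 4 = 0 mod 4}" for r
  proof (induction r)
    case (Suc r) thus ?case using step1[of r] by simp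
  qed simp
  define Bf2 where "Bf2 \<pi> = (LEAST b. \<pi> b = 2)" for \<pi> :: "nat \<Rightarrow> nat"
  have u2: "card {S\<in>X2. \<Sum>S mod 4 = 0 mod 4} = card {S\<in>X2. \<Sum>S mod 4 = (0 + 2) mod 4}"
  proof (rule rot_block[OF p0 n X2_def, where Bf=Bf2 and Cf="\<lambda>\<pi>. 1"])
    fix S assume "S \<in> X2"
    then obtain b where b: "b < m" "prof 4 S b = 2" unfolding X2_def \<Phi>2_def by auto
    have "Bf2 (prof 4 S) \<le> b" unfolding Bf2_def by (rule Least_le) (use b in auto)
    thus "Bf2 (prof 4 S) < m" using b by simp
    have "prof 4 S (Bf2 (prof 4 S)) = 2"
      unfolding Bf2_def by (rule LeastI[of "\<lambda>b. prof 4 S b = 2" b]) (use b in auto)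
    thus "1 * prof 4 S (Bf2 (prof 4 S)) mod 4 = 2 mod 4" by simp
  qed
  have GU: "Gd = U 4 ` {T. T \<subseteq> {..<m} \<and> card T = 1}"
    unfolding Gd_def by (rule prime_good[OF p0 n]) simp
  have Gsum: "\<Sum>S mod 4 = 2" if "S \<in> Gd" for S
  proof -
    have "S \<in> U 4 ` {T. T \<subseteq> {..<m} \<and> card T = 1}" using that by (simp only: GU)
    then obtain T where T: "T \<subseteq> {..<m}" "card T = 1" "S = U 4 T" by blast
    have "finite T" using T(1) finite_subset by blast
    hence "\<Sum>S mod 4 = (1 * (\<Sum>t<(4::nat). t)) mod 4" using U_sum[OF p0, of T] T by simp
    also have "(\<Sum>t<(4::nat). t) = 6" by (simp add: numeral_eq_Suc)
    finally show ?thesis by simp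
  qed
  have cardG: "card Gd = m"
  proof -
    have "card (U 4 ` {T. T \<subseteq> {..<m} \<and> card T = 1}) = card {T. T \<subseteq> {..<m} \<and> card T = 1}"
      by (rule card_image[OF inj_on_subset[OF U_inj[OF p0]]]) (rule subset_UNIV)
    hence "card Gd = card {T. T \<subseteq> {..<m} \<and> card T = 1}" by (simp only: GU)
    thus ?thesis using n_subsets[of "{..<m}" 1] by simp
  qed
  have dec: "cnt n 4 4 r = card {S\<in>X1. \<Sum>S mod 4 = r} + card {S\<in>X2. \<Sum>S mod 4 = r} + card {S\<in>Gd. \<Sum>S mod 4 = r}" for r
  proof -
    have cls: "\<Phi>1 (prof 4 S) \<or> \<Phi>2 (prof 4 S) \<or> \<not>(\<exists>b<m. 0 < prof 4 S b \<and> prof 4 S b < 4)"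
      if "S \<subseteq> {..<n}" for S
    proof -
      have finS: "finite S" using that finite_subset by blast
      { assume a: "\<not> \<Phi>1 (prof 4 S)" "\<not> \<Phi>2 (prof 4 S)"
        have "\<not> (0 < prof 4 S b \<and> prof 4 S b < 4)" if "b < m" for b
        proof -
          have "even (prof 4 S b)" "prof 4 S b \<noteq> 2" using a that unfolding \<Phi>1_def \<Phi>2_def by auto
          moreover have "prof 4 S b \<le> 4" by (rule prof_le[OF p0 finS])
          ultimately show ?thesis by presburger
        qed
        hence "\<not>(\<exists>b<m. 0 < prof 4 S b \<and> prof 4 S b < 4)" by blast }
      thus ?thesis by blast
    qed
    have ex12: "\<not> (\<Phi>1 \<pi> \<and> \<Phi>2 \<pi>)" for \<pi> unfolding \<Phi>1_def \<Phi>2_def by blast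
    have ex1g: "\<not> (\<Phi>1 \<pi> \<and> \<not>(\<exists>b<m. 0 < \<pi> b \<and> \<pi> b < 4))" if "\<forall>b. \<pi> b \<le> 4" for \<pi>
    proof
      assume a: "\<Phi>1 \<pi> \<and> \<not>(\<exists>b<m. 0 < \<pi> b \<and> \<pi> b < 4)"
      then obtain b where "b < m" "odd (\<pi> b)" unfolding \<Phi>1_def by auto
      moreover have "\<pi> b \<le> 4" using that by simp
      ultimately have "0 < \<pi> b \<and> \<pi> b < 4" by presburger
      thus False using a \<open>b < m\<close> by blast
    qed
    have ex2g: "\<not> (\<Phi>2 \<pi> \<and> \<not>(\<exists>b<m. 0 < \<pi> b \<and> \<pi> b < 4))" for \<pi>
    proof
      assume a: "\<Phi>2 \<pi> \<and> \<not>(\<exists>b<m. 0 < \<pi> b \<and> \<pi> b < 4)"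
      then obtain b where "b < m" "\<pi> b = 2" unfolding \<Phi>2_def by blast
      thus False using a by force
    qed
    define A1 where "A1 = {S\<in>X1. \<Sum>S mod 4 = r}"
    define A2 where "A2 = {S\<in>X2. \<Sum>S mod 4 = r}"
    define A3 where "A3 = {S\<in>Gd. \<Sum>S mod 4 = r}"
    have e: "{S. S \<subseteq> {..<n} \<and> card S = 4 \<and> \<Sum>S mod 4 = r} = (A1 \<union> A2) \<union> A3"
    proof (intro equalityI subsetI)
      fix S assume "S \<in> {S. S \<subseteq> {..<n} \<and> card S = 4 \<and> \<Sum>S mod 4 = r}"
      hence S: "S \<subseteq> {..<n}" "card S = 4" "\<Sum>S mod 4 = r" by auto
      show "S \<in> (A1 \<union> A2) \<union> A3" using cls[OF S(1)]
      proof (elim disjE)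
        assume "\<Phi>1 (prof 4 S)" thus ?thesis using S unfolding A1_def X1_def by blast
      next
        assume "\<Phi>2 (prof 4 S)" thus ?thesis using S unfolding A2_def X2_def by blast
      next
        assume "\<not>(\<exists>b<m. 0 < prof 4 S b \<and> prof 4 S b < 4)" thus ?thesis using S unfolding A3_def Gd_def by blast
      qed
    next
      fix S assume "S \<in> (A1 \<union> A2) \<union> A3"
      thus "S \<in> {S. S \<subseteq> {..<n} \<and> card S = 4 \<and> \<Sum>S mod 4 = r}"
        unfolding A1_def A2_def A3_def X1_def X2_def Gd_def by blast
    qed
    have f1: "finite A1" "finite A2" "finite A3" unfolding A1_def A2_def A3_def
      using finX1 finX2 finGd by auto
    have d1: "A1 \<inter> A2 = {}" unfolding A1_def A2_def X1_def X2_def using ex12 by blast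
    have d2: "(A1 \<union> A2) \<inter> A3 = {}"
    proof -
      have "A1 \<inter> A3 = {}"
      proof (rule ccontr)
        assume "A1 \<inter> A3 \<noteq> {}"
        then obtain S where S: "S \<in> A1" "S \<in> A3" by blast
        hence "finite S" unfolding A1_def X1_def using finite_subset by blast
        hence "\<forall>b. prof 4 S b \<le> 4" using prof_le[OF p0] by blast
        thus False using ex1g[of "prof 4 S"] S unfolding A1_def A3_def X1_def Gd_def by blast
      qed
      moreover have "A2 \<inter> A3 = {}" unfolding A2_def A3_def X2_def Gd_def using ex2g by blast
      ultimately show ?thesis by blast
    qed
    have "card ((A1 \<union> A2) \<union> A3) = card (A1 \<union> A2) + card A3"
      by (rule card_Un_disjoint) (use f1 d2 in auto)
    also have "card (A1 \<union> A2) = card A1 + card A2" by (rule card_Un_disjoint[OF f1(1,2) d1])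
    finally have "card ((A1 \<union> A2) \<union> A3) = card A1 + card A2 + card A3" .
    thus ?thesis unfolding cnt_def e A1_def A2_def A3_def .
  qed
  have g0: "card {S\<in>Gd. \<Sum>S mod 4 = 0} = 0"
  proof -
    have e: "{S\<in>Gd. \<Sum>S mod 4 = 0} = {}" using Gsum by force
    show ?thesis unfolding e by simp
  qed
  have g2: "card {S\<in>Gd. \<Sum>S mod 4 = 2} = m"
  proof -
    have "{S\<in>Gd. \<Sum>S mod 4 = 2} = Gd" using Gsum by blast
    thus ?thesis using cardG by simp
  qed
  have c1: "card {S\<in>X1. \<Sum>S mod 4 = 2} = card {S\<in>X1. \<Sum>S mod 4 = 0}"
    using u1[of 2] by simp
  have c2: "card {S\<in>X2. \<Sum>S mod 4 = 2} = card {S\<in>X2. \<Sum>S mod 4 = 0}"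
  proof -
    have z: "(0::nat) mod 4 = 0" "(0 + 2) mod 4 = (2::nat)" by simp_all
    show ?thesis using u2 unfolding z by (rule sym)
  qed
  show ?thesis using dec[of 0] dec[of 2] g0 g2 c1 c2 by linarith
qed

lemma case9_count:
  assumes n: "n = 4*m" and m: "0 < m"
  shows "\<exists>D'. 2 * D' + ((2*m) choose 2) = (n choose 4) \<and>
     cnt n 4 4 0 + cnt n 4 4 2 = D' + ((2*m) choose 2) \<and>
     cnt n 4 4 2 = cnt n 4 4 0 + m \<and> cnt n 4 4 1 = cnt n 4 4 3 \<and>
     cnt n 4 4 0 + cnt n 4 4 1 + cnt n 4 4 2 + cnt n 4 4 3 = (n choose 4)"
proof -
  have n0: "0 < n" using n m by simp
  have pr2: "prime (2::nat)" by simp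
  have nn: "n = 2 * (2*m)" using n by simp
  have kk: "(4::nat) = 2 * 2" by simp
  obtain D' where D': "2 * D' + ((2*m) choose 2) = (n choose 4)"
    "cnt n 4 2 0 = D' + (if 0 = (2 * (\<Sum>t<(2::nat). t)) mod 2 then (2*m) choose 2 else 0)"
    using prime_count[OF pr2 nn kk, of 0] by auto
  have "(2 * (\<Sum>t<(2::nat). t)) mod 2 = 0" by simp
  hence D'2: "cnt n 4 2 0 = D' + ((2*m) choose 2)" using D'(2) by simp
  have m2: "cnt n 4 2 0 = cnt n 4 4 0 + cnt n 4 4 2"
  proof -
    define A where "A r = {S. S \<subseteq> {..<n} \<and> card S = 4 \<and> \<Sum>S mod 4 = r}" for r
    have e: "{S. S \<subseteq> {..<n} \<and> card S = 4 \<and> \<Sum>S mod 2 = 0} = A 0 \<union> A 2"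
      unfolding A_def using small4b by auto
    have fin: "finite (A r)" for r
      unfolding A_def by (rule finite_subset[of _ "Pow {..<n}"]) auto
    have dis: "A 0 \<inter> A 2 = {}" unfolding A_def by auto
    have c: "card {S. S \<subseteq> {..<n} \<and> card S = 4 \<and> \<Sum>S mod 2 = 0} = card (A 0) + card (A 2)"
      unfolding e by (rule card_Un_disjoint[OF fin fin dis])
    show ?thesis using c unfolding cnt_def A_def .
  qed
  have refl: "cnt n 4 4 1 = cnt n 4 4 3"
  proof (rule antisym)
    show "cnt n 4 4 1 \<le> cnt n 4 4 3" by (rule reflect_le[OF n0]) simp_all
    show "cnt n 4 4 3 \<le> cnt n 4 4 1" by (rule reflect_le[OF n0]) simp_all
  qed
  have tot: "cnt n 4 4 0 + cnt n 4 4 1 + cnt n 4 4 2 + cnt n 4 4 3 = (n choose 4)"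
  proof -
    have fin: "finite {S. S \<subseteq> {..<n} \<and> card S = 4}"
      by (rule finite_subset[of _ "Pow {..<n}"]) auto
    have "card {S. S \<subseteq> {..<n} \<and> card S = 4} = (\<Sum>r<4. card {S\<in>{S. S \<subseteq> {..<n} \<and> card S = 4}. \<Sum>S mod 4 = r})"
      by (rule card_partition_mod[OF fin]) simp
    also have "\<dots> = (\<Sum>r<4. cnt n 4 4 r)" unfolding cnt_def by (simp add: conj_assoc)
    also have "\<dots> = cnt n 4 4 0 + cnt n 4 4 1 + cnt n 4 4 2 + cnt n 4 4 3"
      by (simp add: numeral_eq_Suc)
    finally show ?thesis using n_subsets[of "{..<n}" 4] by simp
  qed
  have A2: "cnt n 4 4 2 = cnt n 4 4 0 + m" by (rule block4[OF n m])
  show ?thesis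
  proof (intro exI[of _ D'] conjI)
    show "cnt n 4 4 0 + cnt n 4 4 2 = D' + (2 * m choose 2)" using D'2 m2 by simp
  qed (fact D'(1) A2 refl tot)+
qed



lemma prime_case:
  assumes p: "prime p" and n: "n = p*m" and k: "k = p*i" and g: "gcd n k = p"
    and m: "0 < m" and i: "0 < i"
  shows "(of_nat (cnt n k n (l mod n)) :: rat) =
    ((of_nat (n choose k) - of_nat (m choose i)) / of_nat p +
     (if l mod p = (i * (\<Sum>t<p. t)) mod p then of_nat (m choose i) else 0)) / of_nat m"
proof -
  obtain D where D: "p * D + (m choose i) = (n choose k)"
    "m * cnt n k n (l mod n) = D + (if l mod p = (i * (\<Sum>t<p. t)) mod p then m choose i else 0)"
    using prime_N[OF assms] by blast
  have p0: "0 < p" using p prime_gt_0_nat by blast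
  have D1: "(of_nat D :: rat) = (of_nat (n choose k) - of_nat (m choose i)) / of_nat p"
  proof -
    have "(of_nat p :: rat) * of_nat D + of_nat (m choose i) = of_nat (n choose k)"
      using arg_cong[OF D(1), of "of_nat :: nat \<Rightarrow> rat"] by simp
    thus ?thesis using p0 by (simp add: field_simps)
  qed
  have D2: "(of_nat m :: rat) * of_nat (cnt n k n (l mod n)) =
      of_nat D + (if l mod p = (i * (\<Sum>t<p. t)) mod p then of_nat (m choose i) else 0)"
    using arg_cong[OF D(2), of "of_nat :: nat \<Rightarrow> rat"] by simp
  show ?thesis using D2 m unfolding D1[symmetric] by (simp add: field_simps)
qed

lemma choose_rat:
  assumes "0 < k"
  shows "(of_nat (n choose k) :: rat) = of_nat n * of_nat ((n - 1) choose (k - 1)) / of_nat k"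
proof -
  obtain k' where k': "k = Suc k'" using assms by (cases k) auto
  have "Suc k' * (n choose Suc k') = n * ((n - 1) choose k')" by (rule binomial_absorption)
  hence "(of_nat (Suc k') :: rat) * of_nat (n choose Suc k') = of_nat n * of_nat ((n - 1) choose k')"
    by (metis of_nat_mult)
  thus ?thesis using k' by (simp add: field_simps del: of_nat_Suc)
qed

lemma prime_case2:
  assumes p: "prime p" and n: "n = p*m" and k: "k = p*i" and g: "gcd n k = p"
    and m: "0 < m" and i: "0 < i"
  shows "(of_nat (cnt n k n (l mod n)) :: rat) =
    (of_nat ((n-1) choose (k-1)) - of_nat ((m-1) choose (i-1))) / of_nat k +
     (if l mod p = (i * (\<Sum>t<p. t)) mod p then of_nat ((m-1) choose (i-1)) / of_nat i else 0)"
proof -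
  have p0: "0 < p" using p prime_gt_0_nat by blast
  have k0: "0 < k" using k p0 i by simp
  define Y where "Y = (of_nat ((n-1) choose (k-1)) :: rat)"
  define Z where "Z = (of_nat ((m-1) choose (i-1)) :: rat)"
  have A: "(of_nat (n choose k) :: rat) = of_nat m * Y / of_nat i"
    using choose_rat[OF k0, of n] unfolding Y_def n k using p0 by (simp add: field_simps)
  have B: "(of_nat (m choose i) :: rat) = of_nat m * Z / of_nat i"
    using choose_rat[OF i, of m] unfolding Z_def by simp
  have "(of_nat (cnt n k n (l mod n)) :: rat) =
    ((of_nat m * Y / of_nat i - of_nat m * Z / of_nat i) / of_nat p +
     (if l mod p = (i * (\<Sum>t<p. t)) mod p then of_nat m * Z / of_nat i else 0)) / of_nat m"
    using prime_case[OF assms, of l] unfolding A B .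
  also have "\<dots> = (Y - Z) / of_nat k +
     (if l mod p = (i * (\<Sum>t<p. t)) mod p then Z / of_nat i else 0)"
    using m i p0 unfolding k by (simp add: field_simps)
  finally show ?thesis unfolding Y_def Z_def .
qed

lemma pcase:
  assumes p: "prime p" and n: "q - 1 = p*m" and k: "k = p*i" and g: "gcd (q-1) k = p"
    and m: "0 < m" and i: "0 < i"
  shows "(of_nat (Pplus (q-1) k lam) :: rat) =
    (of_nat ((q-2) choose (k-1)) - of_nat ((m-1) choose (i-1))) / of_nat k +
     (if lam mod p = (i * (\<Sum>t<p. t)) mod p then of_nat ((m-1) choose (i-1)) / of_nat i else 0)"
proof -
  have e: "q - 1 - 1 = q - 2" by simp
  show ?thesis using prime_case2[OF p n k g m i, of lam] unfolding Pplus_cnt e .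
qed

lemma qsplit: "0 < P \<Longrightarrow> q mod P = R \<Longrightarrow> q = P * (q div P) + (R::nat)"
  using mult_div_mod_eq[of P q] by simp

lemma modh: "r < a \<Longrightarrow> (a*t + r) mod a = (r::nat)"
  by (metis add.commute mod_less mod_mult_self2 mult.commute)

lemma pr3: "prime (3::nat)" and pr5: "prime (5::nat)" and pr7: "prime (7::nat)" and pr2: "prime (2::nat)"
  by (simp_all add: prime_nat_iff' atLeastLessThan_nat_numeral)

lemma case1:
  assumes q: "q mod 3 = 1" "q \<ge> 7"
  shows "(of_nat (Pplus (q-1) (5-2) lam) :: rat) = (if lam mod 3 = 0 then (of_nat ((q-2) choose 2) - 1) / 3 + 1
           else (of_nat ((q-2) choose 2) - 1) / 3)"
proof -
  define t where "t = q div 3"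
  have qt: "q = 3*t + 1" using qsplit[of 3 q 1] q unfolding t_def by simp
  have X0: "(of_nat (Pplus (q-1) 3 lam) :: rat) =
    (of_nat ((q-2) choose (3-1)) - of_nat ((t-1) choose (1-1))) / of_nat 3 +
     (if lam mod 3 = (1 * (\<Sum>t<3. t)) mod 3 then of_nat ((t-1) choose (1-1)) / of_nat 1 else 0)"
    by (rule pcase[OF pr3]) (use qt q in \<open>simp_all add: gcd_non_0_nat\<close>)
  have e: "(\<Sum>t<(3::nat). t) = 3" by (simp add: numeral_eq_Suc)
  have X: "(of_nat (Pplus (q-1) 3 lam) :: rat) = (of_nat ((q-2) choose 2) - 1) / 3 + (if lam mod 3 = 0 then 1 else 0)"
    using X0 by (simp add: e)
  show ?thesis using X by simp
qed

lemma case2: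
  assumes q: "q mod 4 = 3" "q \<ge> 7"
  shows "(of_nat (Pplus (q-1) (6-2) lam) :: rat) = (if lam mod 2 = 0 then (of_nat ((q-2) choose 3) + (of_nat q - 3) / 2) / 4
           else (of_nat ((q-2) choose 3) - (of_nat q - 3) / 2) / 4)"
proof -
  define t where "t = q div 4"
  have qt: "q = 4*t + 3" using qsplit[of 4 q 3] q unfolding t_def by simp
  have q1: "q - 1 = 4*t + 2" using qt by simp
  have X0: "(of_nat (Pplus (q-1) 4 lam) :: rat) =
    (of_nat ((q-2) choose (4-1)) - of_nat ((2*t+1-1) choose (2-1))) / of_nat 4 +
     (if lam mod 2 = (2 * (\<Sum>t<2. t)) mod 2 then of_nat ((2*t+1-1) choose (2-1)) / of_nat 2 else 0)"
  proof (rule pcase[OF pr2])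
    have "(q - 1) mod 4 = 2" unfolding q1 by (rule modh) simp
    thus "gcd (q - 1) 4 = 2" by (simp add: gcd_non_0_nat)
  qed (use q1 in simp_all)
  have e: "(\<Sum>t<(2::nat). t) = 1" by (simp add: numeral_eq_Suc)
  have X: "(of_nat (Pplus (q-1) 4 lam) :: rat) = (of_nat ((q-2) choose 3) - 2 * of_nat t) / 4 + (if lam mod 2 = 0 then of_nat t else 0)"
    using X0 by (simp add: e)
  have qr: "(of_nat q :: rat) = 4 * of_nat t + 3" using qt by simp
  show ?thesis using X unfolding qr by (cases "lam mod 2 = 0") (simp_all add: field_simps)
qed

lemma case3:
  assumes q: "q mod 5 = 1" "q \<ge> 11"
  shows "(of_nat (Pplus (q-1) (7-2) lam) :: rat) = (if lam mod 5 = 0 then (of_nat ((q-2) choose 4) - 1) / 5 + 1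
           else (of_nat ((q-2) choose 4) - 1) / 5)"
proof -
  define t where "t = q div 5"
  have qt: "q = 5*t + 1" using qsplit[of 5 q 1] q unfolding t_def by simp
  have X0: "(of_nat (Pplus (q-1) 5 lam) :: rat) =
    (of_nat ((q-2) choose (5-1)) - of_nat ((t-1) choose (1-1))) / of_nat 5 +
     (if lam mod 5 = (1 * (\<Sum>t<5. t)) mod 5 then of_nat ((t-1) choose (1-1)) / of_nat 1 else 0)"
    by (rule pcase[OF pr5]) (use qt q in \<open>simp_all add: gcd_non_0_nat\<close>)
  have e: "(\<Sum>t<(5::nat). t) = 10" by (simp add: numeral_eq_Suc)
  have X: "(of_nat (Pplus (q-1) 5 lam) :: rat) = (of_nat ((q-2) choose 4) - 1) / 5 + (if lam mod 5 = 0 then 1 else 0)"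
    using X0 by (simp add: e)
  show ?thesis using X by simp
qed

lemma case6:
  assumes q: "q mod 7 = 1" "q \<ge> 29"
  shows "(of_nat (Pplus (q-1) (9-2) lam) :: rat) = (if lam mod 7 = 0 then (of_nat ((q-2) choose 6) - 1) / 7 + 1
           else (of_nat ((q-2) choose 6) - 1) / 7)"
proof -
  define t where "t = q div 7"
  have qt: "q = 7*t + 1" using qsplit[of 7 q 1] q unfolding t_def by simp
  have X0: "(of_nat (Pplus (q-1) 7 lam) :: rat) =
    (of_nat ((q-2) choose (7-1)) - of_nat ((t-1) choose (1-1))) / of_nat 7 +
     (if lam mod 7 = (1 * (\<Sum>t<7. t)) mod 7 then of_nat ((t-1) choose (1-1)) / of_nat 1 else 0)"
    by (rule pcase[OF pr7]) (use qt q in \<open>simp_all add: gcd_non_0_nat\<close>)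
  have e: "(\<Sum>t<(7::nat). t) = 21" by (simp add: numeral_eq_Suc)
  have X: "(of_nat (Pplus (q-1) 7 lam) :: rat) = (of_nat ((q-2) choose 6) - 1) / 7 + (if lam mod 7 = 0 then 1 else 0)"
    using X0 by (simp add: e)
  show ?thesis using X by simp
qed

lemma case4:
  assumes q: "(q mod 6 = 3 \<and> q \<ge> 9) \<or> (q mod 6 = 5 \<and> q \<ge> 11)"
  shows "(of_nat (Pplus (q-1) (8-2) lam) :: rat) = (if lam mod 2 = 0
           then (of_nat ((q-2) choose 5) - of_nat (((q-3) div 2) choose 2)) / 6
           else (of_nat ((q-2) choose 5) + of_nat (((q-3) div 2) choose 2)) / 6)"
proof -
  define t where "t = q div 6"
  obtain s where s: "q - 1 = 2 * (s + 1)" "(q - 1) mod 6 = 2 \<or> (q - 1) mod 6 = 4" "(q - 3) div 2 = s"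
  proof (cases "q mod 6 = 3")
    case True
    hence qt: "q = 6*t + 3" using qsplit[of 6 q 3] unfolding t_def by simp
    have "q - 1 = 6*t + 2" using qt by simp
    moreover have "(6*t+2) mod 6 = 2" by (rule modh) simp
    moreover have "(q - 3) div 2 = 3*t" using qt by simp
    ultimately show ?thesis by (intro that[of "3*t"]) simp_all
  next
    case False
    hence q5: "q mod 6 = 5" using q by simp
    hence qt: "q = 6*t + 5" using qsplit[of 6 q 5] unfolding t_def by simp
    have "q - 1 = 6*t + 4" using qt by simp
    moreover have "(6*t+4) mod 6 = 4" by (rule modh) simp
    moreover have "(q - 3) div 2 = 3*t + 1" using qt by simp
    ultimately show ?thesis by (intro that[of "3*t+1"]) simp_all
  qed
  have X0: "(of_nat (Pplus (q-1) 6 lam) :: rat) =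
    (of_nat ((q-2) choose (6-1)) - of_nat ((s+1-1) choose (3-1))) / of_nat 6 +
     (if lam mod 2 = (3 * (\<Sum>t<2. t)) mod 2 then of_nat ((s+1-1) choose (3-1)) / of_nat 3 else 0)"
  proof (rule pcase[OF pr2])
    have "gcd (q - 1) 6 = gcd 6 ((q - 1) mod 6)" by (rule gcd_red_nat)
    thus "gcd (q - 1) 6 = 2" using s(2) by (auto simp: gcd_non_0_nat)
  qed (use s in simp_all)
  have e: "(\<Sum>t<(2::nat). t) = 1" by (simp add: numeral_eq_Suc)
  have X: "(of_nat (Pplus (q-1) 6 lam) :: rat) = (of_nat ((q-2) choose 5) - of_nat (s choose 2)) / 6 +
      (if lam mod 2 = 1 then of_nat (s choose 2) / 3 else 0)"
    using X0 by (simp add: e)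
  show ?thesis using X unfolding s(3) by (cases "lam mod 2 = 0") (simp_all add: field_simps)
qed

lemma case5:
  assumes q: "q mod 6 = 4" "q \<ge> 10"
  shows "(of_nat (Pplus (q-1) (8-2) lam) :: rat) = (if lam mod 3 = 0
           then (of_nat ((q-2) choose 5) / 2 + (of_nat q - 4) / 3) / 3
           else (of_nat ((q-2) choose 5) - (of_nat q - 4) / 3) / 6)"
proof -
  define t where "t = q div 6"
  have qt: "q = 6*t + 4" using qsplit[of 6 q 4] q unfolding t_def by simp
  have q1: "q - 1 = 6*t + 3" using qt by simp
  have X0: "(of_nat (Pplus (q-1) 6 lam) :: rat) =
    (of_nat ((q-2) choose (6-1)) - of_nat ((2*t+1-1) choose (2-1))) / of_nat 6 +
     (if lam mod 3 = (2 * (\<Sum>t<3. t)) mod 3 then of_nat ((2*t+1-1) choose (2-1)) / of_nat 2 else 0)"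
  proof (rule pcase[OF pr3])
    have "(q - 1) mod 6 = 3" unfolding q1 by (rule modh) simp
    thus "gcd (q - 1) 6 = 3" by (simp add: gcd_non_0_nat)
  qed (use q1 in simp_all)
  have e: "(\<Sum>t<(3::nat). t) = 3" by (simp add: numeral_eq_Suc)
  have X: "(of_nat (Pplus (q-1) 6 lam) :: rat) = (of_nat ((q-2) choose 5) - 2 * of_nat t) / 6 + (if lam mod 3 = 0 then of_nat t else 0)"
    using X0 by (simp add: e)
  have qr: "(of_nat q :: rat) = 6 * of_nat t + 4" using qt by simp
  show ?thesis using X unfolding qr by (cases "lam mod 3 = 0") (simp_all add: field_simps)
qed

lemma case7:
  assumes q: "q mod 4 = 3" "q \<ge> 11"
  shows "(of_nat (Pplus (q-1) (10-2) lam) :: rat) = (if lam mod 2 = 0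
           then (of_nat ((q-2) choose 7) + of_nat (((q-3) div 2) choose 3)) / 8
           else (of_nat ((q-2) choose 7) - of_nat (((q-3) div 2) choose 3)) / 8)"
proof -
  define t where "t = q div 4"
  have qt: "q = 4*t + 3" using qsplit[of 4 q 3] q unfolding t_def by simp
  have q1: "q - 1 = 2 * (2*t + 1)" using qt by simp
  have q3: "(q - 3) div 2 = 2*t" using qt by simp
  have g8: "(q - 1) mod 8 = 2 \<or> (q - 1) mod 8 = 6"
  proof (cases "even t")
    case True
    then obtain u where "t = 2*u" by blast
    hence "q - 1 = 8*u + 2" using qt by simp
    moreover have "(8*u+2) mod 8 = 2" by (rule modh) simp
    ultimately show ?thesis by simp
  next
    case False
    then obtain u where "t = 2*u + 1" using oddE by blast
    hence "q - 1 = 8*u + 6" using qt by simp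
    moreover have "(8*u+6) mod 8 = 6" by (rule modh) simp
    ultimately show ?thesis by simp
  qed
  have X0: "(of_nat (Pplus (q-1) 8 lam) :: rat) =
    (of_nat ((q-2) choose (8-1)) - of_nat ((2*t+1-1) choose (4-1))) / of_nat 8 +
     (if lam mod 2 = (4 * (\<Sum>t<2. t)) mod 2 then of_nat ((2*t+1-1) choose (4-1)) / of_nat 4 else 0)"
  proof (rule pcase[OF pr2])
    have "gcd (q - 1) 8 = gcd 8 ((q - 1) mod 8)" by (rule gcd_red_nat)
    thus "gcd (q - 1) 8 = 2" using g8 by (auto simp: gcd_non_0_nat)
  qed (use q1 in simp_all)
  have e: "(\<Sum>t<(2::nat). t) = 1" by (simp add: numeral_eq_Suc)
  have X: "(of_nat (Pplus (q-1) 8 lam) :: rat) = (of_nat ((q-2) choose 7) - of_nat ((2*t) choose 3)) / 8 +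
      (if lam mod 2 = 0 then of_nat ((2*t) choose 3) / 4 else 0)"
    using X0 by (simp add: e)
  show ?thesis using X unfolding q3 by (cases "lam mod 2 = 0") (simp_all add: field_simps)
qed

lemma case8:
  assumes q: "(q mod 9 = 4 \<and> q \<ge> 13) \<or> (q mod 9 = 7 \<and> q \<ge> 16)"
  shows "(of_nat (Pplus (q-1) (11-2) lam) :: rat) = (if lam mod 3 = 0
           then (of_nat ((q-2) choose 8) + 2 * of_nat (((q-4) div 3) choose 2)) / 9
           else (of_nat ((q-2) choose 8) - of_nat (((q-4) div 3) choose 2)) / 9)"
proof -
  define t where "t = q div 9"
  obtain s where s: "q - 1 = 3 * (s + 1)" "(q - 1) mod 9 = 3 \<or> (q - 1) mod 9 = 6" "(q - 4) div 3 = s"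
  proof (cases "q mod 9 = 4")
    case True
    hence qt: "q = 9*t + 4" using qsplit[of 9 q 4] unfolding t_def by simp
    have "q - 1 = 9*t + 3" using qt by simp
    moreover have "(9*t+3) mod 9 = 3" by (rule modh) simp
    moreover have "(q - 4) div 3 = 3*t" using qt by simp
    ultimately show ?thesis by (intro that[of "3*t"]) simp_all
  next
    case False
    hence q7: "q mod 9 = 7" using q by simp
    hence qt: "q = 9*t + 7" using qsplit[of 9 q 7] unfolding t_def by simp
    have "q - 1 = 9*t + 6" using qt by simp
    moreover have "(9*t+6) mod 9 = 6" by (rule modh) simp
    moreover have "(q - 4) div 3 = 3*t + 1" using qt by simp
    ultimately show ?thesis by (intro that[of "3*t+1"]) simp_all
  qed
  have X0: "(of_nat (Pplus (q-1) 9 lam) :: rat) =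
    (of_nat ((q-2) choose (9-1)) - of_nat ((s+1-1) choose (3-1))) / of_nat 9 +
     (if lam mod 3 = (3 * (\<Sum>t<3. t)) mod 3 then of_nat ((s+1-1) choose (3-1)) / of_nat 3 else 0)"
  proof (rule pcase[OF pr3])
    have "gcd (q - 1) 9 = gcd 9 ((q - 1) mod 9)" by (rule gcd_red_nat)
    thus "gcd (q - 1) 9 = 3" using s(2) by (auto simp: gcd_non_0_nat)
  qed (use s in simp_all)
  have e: "(\<Sum>t<(3::nat). t) = 3" by (simp add: numeral_eq_Suc)
  have X: "(of_nat (Pplus (q-1) 9 lam) :: rat) = (of_nat ((q-2) choose 8) - of_nat (s choose 2)) / 9 +
      (if lam mod 3 = 0 then of_nat (s choose 2) / 3 else 0)"
    using X0 by (simp add: e)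
  show ?thesis using X unfolding s(3) by (cases "lam mod 3 = 0") (simp_all add: field_simps)
qed

lemma case9:
  assumes q: "q mod 4 = 1" "q \<ge> 9"
  shows "(of_nat (Pplus (q-1) (6-2) lam) :: rat) =
    (if lam mod 4 = 0 then (of_nat ((q-2) choose 3) + (of_nat q - 7) / 2) / 4
           else if lam mod 2 = 1 then (of_nat ((q-2) choose 3) - (of_nat q - 3) / 2) / 4
           else (of_nat ((q-2) choose 3) + (of_nat q + 1) / 2) / 4)"
proof -
  define t where "t = q div 4"
  have qt: "q = 4*t + 1" using qsplit[of 4 q 1] q unfolding t_def by simp
  define n where "n = q - 1"
  have n: "n = 4*t" unfolding n_def using qt by simp
  have t0: "0 < t" using qt q by simp
  have n0: "0 < n" using n t0 by simp
  obtain D' where D': "2 * D' + ((2*t) choose 2) = (n choose 4)"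
     "cnt n 4 4 0 + cnt n 4 4 2 = D' + ((2*t) choose 2)"
     "cnt n 4 4 2 = cnt n 4 4 0 + t" "cnt n 4 4 1 = cnt n 4 4 3"
     "cnt n 4 4 0 + cnt n 4 4 1 + cnt n 4 4 2 + cnt n 4 4 3 = (n choose 4)"
    using case9_count[OF n t0] by blast
  have g: "gcd n 4 = 4"
  proof -
    have "gcd n 4 = gcd 4 (n mod 4)" by (rule gcd_red_nat)
    thus ?thesis using n by simp
  qed
  define r where "r = lam mod 4"
  have r4: "r < 4" unfolding r_def by simp
  have Pr: "Pplus (q-1) 4 lam = cnt n 4 n r"
  proof -
    have "Pplus (q-1) 4 lam = cnt n 4 n (lam mod n)" unfolding Pplus_cnt n_def ..
    also have "\<dots> = cnt n 4 n (r mod n)"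
      by (rule classes[OF n0]) (simp_all add: g r_def)
    also have "r mod n = r" using r4 n t0 by simp
    finally show ?thesis .
  qed
  have Ar: "cnt n 4 4 r = t * cnt n 4 n r" using agg[OF n0, of 4 r] g r4 n by simp
  define Y where "Y = (of_nat ((q-2) choose 3) :: rat)"
  have cn: "(of_nat (n choose 4) :: rat) = of_nat t * Y"
    using choose_rat[of 4 n] n unfolding Y_def n_def by (simp add: numeral_eq_Suc)
  have c2: "(of_nat ((2*t) choose 2) :: rat) = of_nat t * (2 * of_nat t - 1)"
  proof -
    have "(of_nat ((2*t) choose 2) :: rat) = of_nat (2*t) * of_nat ((2*t - 1) choose 1) / 2"
      using choose_rat[of 2 "2*t"] by simp
    also have "of_nat ((2*t - 1) choose 1) = (of_nat (2*t - 1) :: rat)" by simp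
    also have "(of_nat (2*t - 1) :: rat) = 2 * of_nat t - 1" using t0 by (simp add: of_nat_diff)
    finally show ?thesis by simp
  qed
  define a0 where "a0 = (of_nat (cnt n 4 4 0) :: rat)"
  define a1 where "a1 = (of_nat (cnt n 4 4 1) :: rat)"
  define a2 where "a2 = (of_nat (cnt n 4 4 2) :: rat)"
  define a3 where "a3 = (of_nat (cnt n 4 4 3) :: rat)"
  define d where "d = (of_nat D' :: rat)"
  have E1: "2 * d + of_nat t * (2 * of_nat t - 1) = of_nat t * Y"
    using arg_cong[OF D'(1), of "of_nat :: nat \<Rightarrow> rat"] unfolding d_def cn[symmetric] c2[symmetric] by simp
  have E2: "a0 + a2 = d + of_nat t * (2 * of_nat t - 1)"
    using arg_cong[OF D'(2), of "of_nat :: nat \<Rightarrow> rat"] unfolding a0_def a2_def d_def c2[symmetric] by simp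
  have E3: "a2 = a0 + of_nat t" using arg_cong[OF D'(3), of "of_nat :: nat \<Rightarrow> rat"] unfolding a0_def a2_def by simp
  have E4: "a1 = a3" unfolding a1_def a3_def using D'(4) by simp
  have E5: "a0 + a1 + a2 + a3 = of_nat t * Y"
    using arg_cong[OF D'(5), of "of_nat :: nat \<Rightarrow> rat"] unfolding a0_def a1_def a2_def a3_def cn[symmetric] by simp
  have s0: "4 * a0 = of_nat t * Y + of_nat t * (2 * of_nat t - 1) - 2 * of_nat t" using E1 E2 E3 by linarith
  have s1: "4 * a1 = of_nat t * Y - of_nat t * (2 * of_nat t - 1)" using E1 E2 E3 E4 E5 by linarith
  have s3: "4 * a3 = of_nat t * Y - of_nat t * (2 * of_nat t - 1)" using s1 E4 by simp
  have s2: "4 * a2 = of_nat t * Y + of_nat t * (2 * of_nat t - 1) + 2 * of_nat t" using s0 E3 by linarith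
  have N: "(of_nat (Pplus (q-1) 4 lam) :: rat) = of_nat (cnt n 4 4 r) / of_nat t"
    using Ar t0 unfolding Pr by simp
  have qr: "(of_nat q :: rat) = 4 * of_nat t + 1" using qt by simp
  have m2: "lam mod 2 = r mod 2" unfolding r_def by (simp add: mod_mod_cancel)
  have tt: "(of_nat t :: rat) \<noteq> 0" using t0 by simp
  show ?thesis
  proof -
    have "r = 0 \<or> r = 1 \<or> r = 2 \<or> r = 3" using lt4[OF r4] .
    thus ?thesis
    proof (elim disjE)
      assume rr: "r = 0"
      have "(of_nat (Pplus (q-1) 4 lam) :: rat) = a0 / of_nat t" using N rr unfolding a0_def by simp
      also have "\<dots> = (Y + 2 * of_nat t - 3) / 4" using s0 tt by (simp add: field_simps)
      finally show ?thesis using rr unfolding r_def Y_def qr by (simp add: field_simps)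
    next
      assume rr: "r = 1"
      have "(of_nat (Pplus (q-1) 4 lam) :: rat) = a1 / of_nat t" using N rr unfolding a1_def by simp
      also have "\<dots> = (Y - (2 * of_nat t - 1)) / 4" using s1 tt by (simp add: field_simps)
      finally show ?thesis using rr m2 unfolding r_def Y_def qr by (simp add: field_simps)
    next
      assume rr: "r = 2"
      have "(of_nat (Pplus (q-1) 4 lam) :: rat) = a2 / of_nat t" using N rr unfolding a2_def by simp
      also have "\<dots> = (Y + 2 * of_nat t + 1) / 4" using s2 tt by (simp add: field_simps)
      finally show ?thesis using rr m2 unfolding r_def Y_def qr by (simp add: field_simps)
    next
      assume rr: "r = 3"
      have "(of_nat (Pplus (q-1) 4 lam) :: rat) = a3 / of_nat t" using N rr unfolding a3_def by simp
      also have "\<dots> = (Y - (2 * of_nat t - 1)) / 4" using s3 tt by (simp add: field_simps)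
      finally show ?thesis using rr m2 unfolding r_def Y_def qr by (simp add: field_simps)
    qed
  qed
qed


theorem theorem5p2:
  fixes V :: "('a::{finite,field} option \<Rightarrow> 'a) set"
    and d :: nat and j1 j2 :: "'a option" and \<gamma>1 \<gamma>2 \<beta> :: 'a and lam :: nat
  defines "q \<equiv> CARD('a)"
  defines "\<gamma> \<equiv> - \<gamma>2 / \<gamma>1"
  defines "P \<equiv> (of_nat (Pplus (q - 1) (d - 2) lam) :: rat)"
  assumes d5: "d \<ge> 5"
    and coset: "is_coset (gdrs_code d) V"
    and wt2: "coset_weight V = 2"
    and j12: "j1 \<noteq> j2" and g1: "\<gamma>1 \<noteq> 0" and g2: "\<gamma>2 \<noteq> 0"
    and leader: "is_coset_leader (v2 j1 j2 \<gamma>1 \<gamma>2) V"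
    and prim: "primitive_elem \<beta>"
    and lam: "lam < q - 1" "\<beta> ^ lam = \<gamma>"
  shows
   "(q mod 3 = 1 \<and> q \<ge> 7 \<and> d = 5 \<longrightarrow>
      P = (if lam mod 3 = 0 then (of_nat ((q-2) choose 2) - 1) / 3 + 1
           else (of_nat ((q-2) choose 2) - 1) / 3))
  \<and> (q mod 4 = 3 \<and> q \<ge> 7 \<and> d = 6 \<longrightarrow>
      P = (if lam mod 2 = 0 then (of_nat ((q-2) choose 3) + (of_nat q - 3) / 2) / 4
           else (of_nat ((q-2) choose 3) - (of_nat q - 3) / 2) / 4))
  \<and> (q mod 5 = 1 \<and> q \<ge> 11 \<and> d = 7 \<longrightarrow>
      P = (if lam mod 5 = 0 then (of_nat ((q-2) choose 4) - 1) / 5 + 1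
           else (of_nat ((q-2) choose 4) - 1) / 5))
  \<and> (((q mod 6 = 3 \<and> q \<ge> 9) \<or> (q mod 6 = 5 \<and> q \<ge> 11)) \<and> d = 8 \<longrightarrow>
      P = (if lam mod 2 = 0
           then (of_nat ((q-2) choose 5) - of_nat (((q-3) div 2) choose 2)) / 6
           else (of_nat ((q-2) choose 5) + of_nat (((q-3) div 2) choose 2)) / 6))
  \<and> (q mod 6 = 4 \<and> q \<ge> 10 \<and> d = 8 \<longrightarrow>
      P = (if lam mod 3 = 0
           then (of_nat ((q-2) choose 5) / 2 + (of_nat q - 4) / 3) / 3
           else (of_nat ((q-2) choose 5) - (of_nat q - 4) / 3) / 6))
  \<and> (q mod 7 = 1 \<and> q \<ge> 29 \<and> d = 9 \<longrightarrow>
      P = (if lam mod 7 = 0 then (of_nat ((q-2) choose 6) - 1) / 7 + 1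
           else (of_nat ((q-2) choose 6) - 1) / 7))
  \<and> (q mod 4 = 3 \<and> q \<ge> 11 \<and> d = 10 \<longrightarrow>
      P = (if lam mod 2 = 0
           then (of_nat ((q-2) choose 7) + of_nat (((q-3) div 2) choose 3)) / 8
           else (of_nat ((q-2) choose 7) - of_nat (((q-3) div 2) choose 3)) / 8))
  \<and> (((q mod 9 = 4 \<and> q \<ge> 13) \<or> (q mod 9 = 7 \<and> q \<ge> 16)) \<and> d = 11 \<longrightarrow>
      P = (if lam mod 3 = 0
           then (of_nat ((q-2) choose 8) + 2 * of_nat (((q-4) div 3) choose 2)) / 9
           else (of_nat ((q-2) choose 8) - of_nat (((q-4) div 3) choose 2)) / 9))
  \<and> (q mod 4 = 1 \<and> q \<ge> 9 \<and> d = 6 \<longrightarrow>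
      P = (if lam mod 4 = 0 then (of_nat ((q-2) choose 3) + (of_nat q - 7) / 2) / 4
           else if lam mod 2 = 1 then (of_nat ((q-2) choose 3) - (of_nat q - 3) / 2) / 4
           else (of_nat ((q-2) choose 3) + (of_nat q + 1) / 2) / 4))"
proof -
  show ?thesis unfolding P_def
  proof (intro conjI impI)
    assume H: "q mod 3 = 1 \<and> q \<ge> 7 \<and> d = 5"
    thus "(of_nat (Pplus (q - 1) (d - 2) lam) :: rat) = (if lam mod 3 = 0 then (of_nat ((q-2) choose 2) - 1) / 3 + 1
           else (of_nat ((q-2) choose 2) - 1) / 3)" using case1[of q lam] by simp
  next
    assume H: "q mod 4 = 3 \<and> q \<ge> 7 \<and> d = 6"
    thus "(of_nat (Pplus (q - 1) (d - 2) lam) :: rat) = (if lam mod 2 = 0 then (of_nat ((q-2) choose 3) + (of_nat q - 3) / 2) / 4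
           else (of_nat ((q-2) choose 3) - (of_nat q - 3) / 2) / 4)" using case2[of q lam] by simp
  next
    assume H: "q mod 5 = 1 \<and> q \<ge> 11 \<and> d = 7"
    thus "(of_nat (Pplus (q - 1) (d - 2) lam) :: rat) = (if lam mod 5 = 0 then (of_nat ((q-2) choose 4) - 1) / 5 + 1
           else (of_nat ((q-2) choose 4) - 1) / 5)" using case3[of q lam] by simp
  next
    assume H: "((q mod 6 = 3 \<and> q \<ge> 9) \<or> (q mod 6 = 5 \<and> q \<ge> 11)) \<and> d = 8"
    thus "(of_nat (Pplus (q - 1) (d - 2) lam) :: rat) = (if lam mod 2 = 0
           then (of_nat ((q-2) choose 5) - of_nat (((q-3) div 2) choose 2)) / 6
           else (of_nat ((q-2) choose 5) + of_nat (((q-3) div 2) choose 2)) / 6)" using case4[of q lam] by simp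
  next
    assume H: "q mod 6 = 4 \<and> q \<ge> 10 \<and> d = 8"
    thus "(of_nat (Pplus (q - 1) (d - 2) lam) :: rat) = (if lam mod 3 = 0
           then (of_nat ((q-2) choose 5) / 2 + (of_nat q - 4) / 3) / 3
           else (of_nat ((q-2) choose 5) - (of_nat q - 4) / 3) / 6)" using case5[of q lam] by simp
  next
    assume H: "q mod 7 = 1 \<and> q \<ge> 29 \<and> d = 9"
    thus "(of_nat (Pplus (q - 1) (d - 2) lam) :: rat) = (if lam mod 7 = 0 then (of_nat ((q-2) choose 6) - 1) / 7 + 1
           else (of_nat ((q-2) choose 6) - 1) / 7)" using case6[of q lam] by simp
  next
    assume H: "q mod 4 = 3 \<and> q \<ge> 11 \<and> d = 10"
    thus "(of_nat (Pplus (q - 1) (d - 2) lam) :: rat) = (if lam mod 2 = 0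
           then (of_nat ((q-2) choose 7) + of_nat (((q-3) div 2) choose 3)) / 8
           else (of_nat ((q-2) choose 7) - of_nat (((q-3) div 2) choose 3)) / 8)" using case7[of q lam] by simp
  next
    assume H: "((q mod 9 = 4 \<and> q \<ge> 13) \<or> (q mod 9 = 7 \<and> q \<ge> 16)) \<and> d = 11"
    thus "(of_nat (Pplus (q - 1) (d - 2) lam) :: rat) = (if lam mod 3 = 0
           then (of_nat ((q-2) choose 8) + 2 * of_nat (((q-4) div 3) choose 2)) / 9
           else (of_nat ((q-2) choose 8) - of_nat (((q-4) div 3) choose 2)) / 9)" using case8[of q lam] by simp
  next
    assume H: "q mod 4 = 1 \<and> q \<ge> 9 \<and> d = 6"
    thus "(of_nat (Pplus (q - 1) (d - 2) lam) :: rat) = (if lam mod 4 = 0 then (of_nat ((q-2) choose 3) + (of_nat q - 7) / 2) / 4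
           else if lam mod 2 = 1 then (of_nat ((q-2) choose 3) - (of_nat q - 3) / 2) / 4
           else (of_nat ((q-2) choose 3) + (of_nat q + 1) / 2) / 4)" using case9[of q lam] by simp
  qed
qed

end
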